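(* Let $b(z)$ be a holomorphic function, $\bar b(\bar z)=\overline{b(z)}$, let $r(y)$ and $k(y)$ be arbitrary smooth real-valued functions of one real variable, and put $y=i(\bar q-q)/2$. Let $G(z,\bar z)$ be a real function with $G_{z\bar z}=\dfrac{b(z)+\bar b(\bar z)}{(z+\bar z)^2}$ and let $K(y,z,\bar z)$ be an antiderivative with respect to $y$ of $\ln\!\left[\dfrac{\bar z+2ik(y)}{z-2ik(y)}\right]$. Then each of the functions $$\psi_1=[q+b(z)]\ln[q+b(z)]+[\bar q+\bar b(\bar z)]\ln[\bar q+\bar b(\bar z)]-(q+\bar q)[\ln(z+\bar z)+1]+G(z,\bar z)+r(y),$$ $$\psi_2=\psi_1+2iy\ln(\bar z/z),\qquad \psi_3=\psi_1+2iK(y,z,\bar z)$$ is a solution of $$\psi_{q\bar q}\psi_{z\bar z}-\psi_{q\bar z}\psi_{\bar q z}=e^{\psi_q+\psi_{\bar q}}\bigl(\psi_{q\bar q}^2-\psi_{qq}\psi_{\bar q\bar q}\bigr).$$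
   Context: All functions are considered on an open set where the logarithms are defined, with branches chosen so that $\ln(\bar q+\bar b)=\overline{\ln(q+b)}$, and with $z+\bar z>0$. Subscripts denote partial (Wirtinger) derivatives with respect to the complex variables $q,\bar q,z,\bar z$; bars denote complex conjugation. *)

theory Defs
  imports "HOL-Analysis.Analysis"
begin

definition dd :: "('a::real_normed_vector \<Rightarrow> 'b::real_normed_vector) \<Rightarrow> 'a \<Rightarrow> 'a \<Rightarrow> 'b" where
  "dd f v p = vector_derivative (\<lambda>t::real. f (p + t *\<^sub>R v)) (at 0)"

definition wz :: "(complex \<Rightarrow> complex) \<Rightarrow> complex \<Rightarrow> complex" where
  "wz f z = (dd f 1 z - \<i> * dd f \<i> z) / 2"
definition wzb :: "(complex \<Rightarrow> complex) \<Rightarrow> complex \<Rightarrow> complex" where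
  "wzb f z = (dd f 1 z + \<i> * dd f \<i> z) / 2"

definition Wq :: "(complex \<times> complex \<Rightarrow> complex) \<Rightarrow> complex \<times> complex \<Rightarrow> complex" where
  "Wq f p = (dd f (1, 0) p - \<i> * dd f (\<i>, 0) p) / 2"
definition Wqb :: "(complex \<times> complex \<Rightarrow> complex) \<Rightarrow> complex \<times> complex \<Rightarrow> complex" where
  "Wqb f p = (dd f (1, 0) p + \<i> * dd f (\<i>, 0) p) / 2"
definition Wz :: "(complex \<times> complex \<Rightarrow> complex) \<Rightarrow> complex \<times> complex \<Rightarrow> complex" where
  "Wz f p = (dd f (0, 1) p - \<i> * dd f (0, \<i>) p) / 2"
definition Wzb :: "(complex \<times> complex \<Rightarrow> complex) \<Rightarrow> complex \<times> complex \<Rightarrow> complex" where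
  "Wzb f p = (dd f (0, 1) p + \<i> * dd f (0, \<i>) p) / 2"

definition solves :: "(complex \<times> complex) set \<Rightarrow> (complex \<times> complex \<Rightarrow> complex) \<Rightarrow> bool" where
  "solves S \<psi> \<longleftrightarrow> (\<forall>p\<in>S.
     Wqb (Wq \<psi>) p * Wzb (Wz \<psi>) p - Wzb (Wq \<psi>) p * Wz (Wqb \<psi>) p
     = exp (Wq \<psi> p + Wqb \<psi> p) * ((Wqb (Wq \<psi>) p)\<^sup>2 - Wq (Wq \<psi>) p * Wqb (Wqb \<psi>) p))"

definition smooth_real :: "(real \<Rightarrow> real) \<Rightarrow> bool" where
  "smooth_real f \<longleftrightarrow> (\<forall>n x. ((deriv ^^ n) f) differentiable (at x))"

definition oint :: "(real \<Rightarrow> complex) \<Rightarrow> real \<Rightarrow> real \<Rightarrow> complex" where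
  "oint f a c = (if a \<le> c then integral {a..c} f else - integral {c..a} f)"

definition Kfun :: "(real \<Rightarrow> real) \<Rightarrow> real \<Rightarrow> real \<Rightarrow> complex \<Rightarrow> complex" where
  "Kfun k y0 y z = oint (\<lambda>t. Ln ((cnj z + 2 * \<i> * of_real (k t)) / (z - 2 * \<i> * of_real (k t)))) y0 y"

text \<open>L p is the chosen branch of ln(q + b(z)); ln(qbar + bbar(zbar)) is its conjugate.
  y = i(qbar - q)/2 = Im q.\<close>
definition psi1 :: "(complex \<Rightarrow> complex) \<Rightarrow> (complex \<times> complex \<Rightarrow> complex) \<Rightarrow> (complex \<Rightarrow> real)
    \<Rightarrow> (real \<Rightarrow> real) \<Rightarrow> complex \<times> complex \<Rightarrow> complex" where
  "psi1 b L G r p = (let q = fst p; z = snd p in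
      (q + b z) * L p + (cnj q + cnj (b z)) * cnj (L p)
      - (q + cnj q) * (Ln (z + cnj z) + 1) + of_real (G z) + of_real (r (Im q)))"

definition psi2 :: "(complex \<Rightarrow> complex) \<Rightarrow> (complex \<times> complex \<Rightarrow> complex) \<Rightarrow> (complex \<Rightarrow> real)
    \<Rightarrow> (real \<Rightarrow> real) \<Rightarrow> complex \<times> complex \<Rightarrow> complex" where
  "psi2 b L G r p = psi1 b L G r p + 2 * \<i> * of_real (Im (fst p)) * Ln (cnj (snd p) / snd p)"

definition psi3 :: "(complex \<Rightarrow> complex) \<Rightarrow> (complex \<times> complex \<Rightarrow> complex) \<Rightarrow> (complex \<Rightarrow> real)
    \<Rightarrow> (real \<Rightarrow> real) \<Rightarrow> (real \<Rightarrow> real) \<Rightarrow> real \<Rightarrow> complex \<times> complex \<Rightarrow> complex" where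
  "psi3 b L G r k y0 p = psi1 b L G r p + 2 * \<i> * Kfun k y0 (Im (fst p)) (snd p)"

end

theory Submission
  imports Defs
begin


definition hseg :: "(complex \<Rightarrow> complex) \<Rightarrow> real \<Rightarrow> real \<Rightarrow> real \<Rightarrow> complex" where
  "hseg F c a b = integral {a..b} (\<lambda>x. F (Complex x c))"
definition vseg :: "(complex \<Rightarrow> complex) \<Rightarrow> real \<Rightarrow> real \<Rightarrow> real \<Rightarrow> complex" where
  "vseg F c a b = integral {a..b} (\<lambda>y. F (Complex c y))"
definition bd :: "(complex \<Rightarrow> complex) \<Rightarrow> real \<Rightarrow> real \<Rightarrow> real \<Rightarrow> real \<Rightarrow> complex" where
  "bd F a b c d = hseg F c a b + \<i> * vseg F b c d - hseg F d a b - \<i> * vseg F a c d"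
definition rect :: "real \<Rightarrow> real \<Rightarrow> real \<Rightarrow> real \<Rightarrow> complex set" where
  "rect a b c d = {z. a \<le> Re z \<and> Re z \<le> b \<and> c \<le> Im z \<and> Im z \<le> d}"
definition edges :: "real \<Rightarrow> real \<Rightarrow> real \<Rightarrow> real \<Rightarrow> complex set" where
  "edges a b c d = {z. ((Re z = a \<or> Re z = b) \<and> c \<le> Im z \<and> Im z \<le> d) \<or>
                       ((Im z = c \<or> Im z = d) \<and> a \<le> Re z \<and> Re z \<le> b)}"


lemma cont_Complex1: "continuous_on A (\<lambda>x. Complex x c)"
  unfolding Complex_eq by (intro continuous_intros)
lemma cont_Complex2: "continuous_on A (\<lambda>y. Complex c y)"
  unfolding Complex_eq by (intro continuous_intros)

lemma hint:
  fixes F :: "complex \<Rightarrow> complex"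
  assumes "continuous_on K F" "\<forall>x\<in>{a..b}. Complex x c \<in> K"
  shows "(\<lambda>x. F (Complex x c)) integrable_on {a..b}"
  apply (rule Henstock_Kurzweil_Integration.integrable_continuous_interval)
  apply (rule continuous_on_compose2[OF assms(1) cont_Complex1])
  using assms(2) by auto

lemma vint:
  fixes F :: "complex \<Rightarrow> complex"
  assumes "continuous_on K F" "\<forall>y\<in>{a..b}. Complex c y \<in> K"
  shows "(\<lambda>y. F (Complex c y)) integrable_on {a..b}"
  apply (rule Henstock_Kurzweil_Integration.integrable_continuous_interval)
  apply (rule continuous_on_compose2[OF assms(1) cont_Complex2])
  using assms(2) by auto

lemma bd_split_x:
  assumes "a \<le> m" "m \<le> b" "continuous_on K F" "edges a m c d \<subseteq> K" "edges m b c d \<subseteq> K"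
  shows "bd F a b c d = bd F a m c d + bd F m b c d"
proof -
  have h: "hseg F e a b = hseg F e a m + hseg F e m b" if "e = c \<or> e = d" for e
  proof -
    have "\<forall>x\<in>{a..b}. Complex x e \<in> K"
    proof
      fix x assume x: "x \<in> {a..b}"
      show "Complex x e \<in> K"
      proof (cases "x \<le> m")
        case True thus ?thesis using assms(4) x that by (auto simp: edges_def)
      next
        case False thus ?thesis using assms(5) x that by (auto simp: edges_def)
      qed
    qed
    then show ?thesis unfolding hseg_def
      using Henstock_Kurzweil_Integration.integral_combine[OF assms(1,2) hint[OF assms(3)]] \<open>\<forall>x\<in>{a..b}. Complex x e \<in> K\<close> by simp
  qed
  show ?thesis unfolding bd_def using h[of c] h[of d] by (simp add: algebra_simps)
qed

lemma bd_split_y: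
  assumes "c \<le> n" "n \<le> d" "continuous_on K F" "edges a b c n \<subseteq> K" "edges a b n d \<subseteq> K"
  shows "bd F a b c d = bd F a b c n + bd F a b n d"
proof -
  have h: "vseg F e c d = vseg F e c n + vseg F e n d" if "e = a \<or> e = b" for e
  proof -
    have "\<forall>y\<in>{c..d}. Complex e y \<in> K"
    proof
      fix y assume y: "y \<in> {c..d}"
      show "Complex e y \<in> K"
      proof (cases "y \<le> n")
        case True thus ?thesis using assms(4) y that by (auto simp: edges_def)
      next
        case False thus ?thesis using assms(5) y that by (auto simp: edges_def)
      qed
    qed
    then show ?thesis unfolding vseg_def
      using Henstock_Kurzweil_Integration.integral_combine[OF assms(1,2) vint[OF assms(3)]] \<open>\<forall>y\<in>{c..d}. Complex e y \<in> K\<close> by simp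
  qed
  show ?thesis unfolding bd_def using h[of a] h[of b] by (simp add: algebra_simps)
qed

lemma edges_int:
  fixes F :: "complex \<Rightarrow> complex"
  assumes "continuous_on K F" "edges a b c d \<subseteq> K"
  shows "(\<lambda>x. F (Complex x c)) integrable_on {a..b}" "(\<lambda>x. F (Complex x d)) integrable_on {a..b}"
        "(\<lambda>y. F (Complex a y)) integrable_on {c..d}" "(\<lambda>y. F (Complex b y)) integrable_on {c..d}"
  by (rule hint[OF assms(1)] vint[OF assms(1)], use assms(2) in \<open>auto simp: edges_def\<close>)+

lemma bd_diff:
  assumes "continuous_on K F" "continuous_on K G" "edges a b c d \<subseteq> K"
  shows "bd (\<lambda>z. F z - G z) a b c d = bd F a b c d - bd G a b c d"
  using edges_int[OF assms(1,3)] edges_int[OF assms(2,3)]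
  unfolding bd_def hseg_def vseg_def by (simp add: integral_diff algebra_simps)

lemma bd_cmult: "bd (\<lambda>z. k * F z) a b c d = k * bd F a b c d"
  unfolding bd_def hseg_def vseg_def by (simp add: algebra_simps)

lemma bd_bound:
  assumes "a \<le> b" "c \<le> d" "continuous_on K F" "edges a b c d \<subseteq> K"
    "\<forall>z\<in>edges a b c d. norm (F z) \<le> M"
  shows "norm (bd F a b c d) \<le> 2 * M * ((b - a) + (d - c))"
proof -
  have c1: "continuous_on {a..b} (\<lambda>x. F (Complex x e))" if "e = c \<or> e = d" for e
    apply (rule continuous_on_compose2[OF assms(3) cont_Complex1])
    using assms(4) that by (auto simp: edges_def subset_iff)
  have c2: "continuous_on {c..d} (\<lambda>y. F (Complex e y))" if "e = a \<or> e = b" for e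
    apply (rule continuous_on_compose2[OF assms(3) cont_Complex2])
    using assms(4) that by (auto simp: edges_def subset_iff)
  have h: "norm (hseg F e a b) \<le> M * (b - a)" if "e = c \<or> e = d" for e
    unfolding hseg_def
    apply (rule integral_bound[OF assms(1) c1[OF that]])
    using assms(5) that by (auto simp: edges_def)
  have v: "norm (vseg F e c d) \<le> M * (d - c)" if "e = a \<or> e = b" for e
    unfolding vseg_def
    apply (rule integral_bound[OF assms(2) c2[OF that]])
    using assms(5) that by (auto simp: edges_def)
  have "norm (bd F a b c d) \<le> norm (hseg F c a b) + norm (\<i> * vseg F b c d) + norm (hseg F d a b) + norm (\<i> * vseg F a c d)"
    unfolding bd_def by (smt (verit) norm_triangle_ineq4 norm_triangle_ineq)
  also have "\<dots> \<le> M * (b - a) + M * (d - c) + M * (b - a) + M * (d - c)"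
    using h[of c] h[of d] v[of a] v[of b] by (simp add: norm_mult)
  finally show ?thesis by (simp add: algebra_simps)
qed

lemma bd_primitive:
  assumes "a \<le> b" "c \<le> d" "\<forall>z\<in>edges a b c d. (P has_field_derivative F z) (at z)"
  shows "bd F a b c d = 0"
proof -
  have h: "hseg F e a b = P (Complex b e) - P (Complex a e)" if "e = c \<or> e = d" for e
  proof -
    have "((\<lambda>x. F (Complex x e)) has_integral (P (Complex b e) - P (Complex a e))) {a..b}"
    proof (rule fundamental_theorem_of_calculus[OF assms(1)])
      fix x assume "x \<in> {a..b}" then have x: "a \<le> x" "x \<le> b" by auto
      have d1: "(P has_field_derivative F (Complex x e)) (at (of_real x + \<i> * e))"
        using assms(3) x that by (auto simp: edges_def Complex_eq)
      have d2: "((\<lambda>\<zeta>. \<zeta> + \<i> * e) has_field_derivative 1) (at (of_real x))"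
        by (auto intro!: derivative_eq_intros)
      have "((\<lambda>\<zeta>. P (\<zeta> + \<i> * e)) has_field_derivative F (Complex x e)) (at (of_real x))"
        using DERIV_chain2[OF d1 d2] by simp
      from has_vector_derivative_real_field[OF this]
      show "((\<lambda>x. P (Complex x e)) has_vector_derivative F (Complex x e)) (at x within {a..b})"
        by (simp add: Complex_eq)
    qed
    then show ?thesis unfolding hseg_def by (simp add: integral_unique)
  qed
  have v: "\<i> * vseg F e c d = P (Complex e d) - P (Complex e c)" if "e = a \<or> e = b" for e
  proof -
    have "((\<lambda>y. F (Complex e y) * \<i>) has_integral (P (Complex e d) - P (Complex e c))) {c..d}"
    proof (rule fundamental_theorem_of_calculus[OF assms(2)])
      fix y assume "y \<in> {c..d}" then have y: "c \<le> y" "y \<le> d" by auto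
      have d1: "(P has_field_derivative F (Complex e y)) (at (e + \<i> * of_real y))"
        using assms(3) y that by (auto simp: edges_def Complex_eq)
      have d2: "((\<lambda>\<zeta>. e + \<i> * \<zeta>) has_field_derivative \<i>) (at (of_real y))"
        by (auto intro!: derivative_eq_intros)
      have "((\<lambda>\<zeta>. P (e + \<i> * \<zeta>)) has_field_derivative F (Complex e y) * \<i>) (at (of_real y))"
        using DERIV_chain2[OF d1 d2] by simp
      from has_vector_derivative_real_field[OF this]
      show "((\<lambda>y. P (Complex e y)) has_vector_derivative F (Complex e y) * \<i>) (at y within {c..d})"
        by (simp add: Complex_eq)
    qed
    then have "integral {c..d} (\<lambda>y. F (Complex e y) * \<i>) = P (Complex e d) - P (Complex e c)"
      by (rule integral_unique)
    then show ?thesis unfolding vseg_def by (metis integral_mult_left mult.commute)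
  qed
  show ?thesis unfolding bd_def using h[of c] h[of d] v[of a] v[of b] by simp
qed

lemma edges_sub: "a \<le> x1 \<Longrightarrow> x2 \<le> b \<Longrightarrow> c \<le> y1 \<Longrightarrow> y2 \<le> d \<Longrightarrow> x1 \<le> x2 \<Longrightarrow> y1 \<le> y2
   \<Longrightarrow> edges x1 x2 y1 y2 \<subseteq> rect a b c d"
  by (auto simp: edges_def rect_def)

lemma rect_sub: "a \<le> x1 \<Longrightarrow> x2 \<le> b \<Longrightarrow> c \<le> y1 \<Longrightarrow> y2 \<le> d
   \<Longrightarrow> rect x1 x2 y1 y2 \<subseteq> rect a b c d"
  by (auto simp: rect_def)

lemma closed_rect: "closed (rect a b c d)"
proof -
  have "rect a b c d = {z. a \<le> Re z} \<inter> {z. Re z \<le> b} \<inter> {z. c \<le> Im z} \<inter> {z. Im z \<le> d}"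
    by (auto simp: rect_def)
  thus ?thesis
    by (simp add: closed_Int closed_halfspace_Re_ge closed_halfspace_Re_le
        closed_halfspace_Im_ge closed_halfspace_Im_le)
qed

lemma quarter:
  assumes "continuous_on K F" "rect a b c d \<subseteq> K" "a \<le> b" "c \<le> d"
  shows "bd F a b c d = bd F a ((a+b)/2) c ((c+d)/2) + bd F ((a+b)/2) b c ((c+d)/2)
     + bd F a ((a+b)/2) ((c+d)/2) d + bd F ((a+b)/2) b ((c+d)/2) d"
proof -
  let ?m = "(a+b)/2" and ?n = "(c+d)/2"
  have e: "edges x1 x2 y1 y2 \<subseteq> K" if "a \<le> x1" "x2 \<le> b" "c \<le> y1" "y2 \<le> d" "x1 \<le> x2" "y1 \<le> y2" for x1 x2 y1 y2
    using edges_sub[OF that] assms(2) by blast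
  have 1: "bd F a b c d = bd F a ?m c d + bd F ?m b c d"
    by (rule bd_split_x[OF _ _ assms(1) e e]) (use assms(3,4) in auto)
  have 2: "bd F a ?m c d = bd F a ?m c ?n + bd F a ?m ?n d"
    by (rule bd_split_y[OF _ _ assms(1) e e]) (use assms(3,4) in auto)
  have 3: "bd F ?m b c d = bd F ?m b c ?n + bd F ?m b ?n d"
    by (rule bd_split_y[OF _ _ assms(1) e e]) (use assms(3,4) in auto)
  show ?thesis using 1 2 3 by simp
qed

lemma card4: "card {a, b, c, d} \<le> 4"
  by (simp add: card_insert_if)

lemma goursat:
  fixes F :: "complex \<Rightarrow> complex"
  assumes U: "open U" and diff: "\<And>z. z \<in> U \<Longrightarrow> F field_differentiable (at z)"
    and sub: "rect a b c d \<subseteq> U" and ab: "a \<le> b" and cd: "c \<le> d"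
  shows "bd F a b c d = 0"
proof (rule ccontr)
  assume nz: "bd F a b c d \<noteq> 0"
  have contF: "continuous_on U F"
    by (intro continuous_at_imp_continuous_on ballI field_differentiable_imp_continuous_at diff)
  define s where "s = b - a"
  define t where "t = d - c"
  have s0: "s \<ge> 0" and t0: "t \<ge> 0" using ab cd by (auto simp: s_def t_def)
  define R where "R \<zeta> n = rect (Re \<zeta>) (Re \<zeta> + s/2^n) (Im \<zeta>) (Im \<zeta> + t/2^n)" for \<zeta> n
  define B where "B \<zeta> n = bd F (Re \<zeta>) (Re \<zeta> + s/2^n) (Im \<zeta>) (Im \<zeta> + t/2^n)" for \<zeta> n
  define cand where "cand \<zeta> n = {\<zeta>, \<zeta> + of_real (s/2^Suc n), \<zeta> + \<i> * of_real (t/2^Suc n),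
      \<zeta> + of_real (s/2^Suc n) + \<i> * of_real (t/2^Suc n)}" for \<zeta> n
  have subc: "R \<zeta>' (Suc n) \<subseteq> R \<zeta> n" if "\<zeta>' \<in> cand \<zeta> n" for \<zeta> \<zeta>' n
  proof -
    have "s/(2*2^n) \<ge> 0" "t/(2*2^n) \<ge> 0" using s0 t0 by auto
    moreover have "s/2^n = s/(2*2^n) + s/(2*2^n)" "t/2^n = t/(2*2^n) + t/(2*2^n)" by auto
    ultimately show ?thesis using that unfolding R_def cand_def rect_def
      by auto
  qed
  have quart: "B \<zeta> n = (\<Sum>\<zeta>'\<in>cand \<zeta> n. B \<zeta>' (Suc n))" if "R \<zeta> n \<subseteq> U" for \<zeta> n
  proof -
    define h where "h = s/2^Suc n"
    define k where "k = t/2^Suc n"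
    have h0: "h \<ge> 0" "k \<ge> 0" using s0 t0 by (auto simp: h_def k_def)
    have e: "s/2^n = 2*h" "t/2^n = 2*k" by (simp_all add: h_def k_def)
    have q: "B \<zeta> n = B \<zeta> (Suc n) + B (\<zeta> + of_real h) (Suc n)
       + B (\<zeta> + \<i> * of_real k) (Suc n) + B (\<zeta> + of_real h + \<i> * of_real k) (Suc n)"
    proof -
      have sub': "rect (Re \<zeta>) (Re \<zeta> + 2*h) (Im \<zeta>) (Im \<zeta> + 2*k) \<subseteq> U"
        using that unfolding R_def e .
      have Q: "bd F (Re \<zeta>) (Re \<zeta> + 2*h) (Im \<zeta>) (Im \<zeta> + 2*k) =
        bd F (Re \<zeta>) (Re \<zeta> + h) (Im \<zeta>) (Im \<zeta> + k) + bd F (Re \<zeta> + h) (Re \<zeta> + 2*h) (Im \<zeta>) (Im \<zeta> + k)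
        + bd F (Re \<zeta>) (Re \<zeta> + h) (Im \<zeta> + k) (Im \<zeta> + 2*k) + bd F (Re \<zeta> + h) (Re \<zeta> + 2*h) (Im \<zeta> + k) (Im \<zeta> + 2*k)"
      proof -
        have m1: "(Re \<zeta> + (Re \<zeta> + 2*h))/2 = Re \<zeta> + h" and m2: "(Im \<zeta> + (Im \<zeta> + 2*k))/2 = Im \<zeta> + k"
          by simp_all
        show ?thesis using quarter[OF contF sub'] h0 unfolding m1 m2 by simp
      qed
      have b1: "B \<zeta> n = bd F (Re \<zeta>) (Re \<zeta> + 2*h) (Im \<zeta>) (Im \<zeta> + 2*k)" by (simp only: B_def e)
      have b2: "B \<zeta>' (Suc n) = bd F (Re \<zeta>') (Re \<zeta>' + h) (Im \<zeta>') (Im \<zeta>' + k)" for \<zeta>'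
        by (simp only: B_def h_def k_def)
      have c1: "B \<zeta> (Suc n) = bd F (Re \<zeta>) (Re \<zeta> + h) (Im \<zeta>) (Im \<zeta> + k)" by (rule b2)
      have c2: "B (\<zeta> + of_real h) (Suc n) = bd F (Re \<zeta> + h) (Re \<zeta> + 2*h) (Im \<zeta>) (Im \<zeta> + k)"
        unfolding b2 by (simp add: algebra_simps)
      have c3: "B (\<zeta> + \<i> * of_real k) (Suc n) = bd F (Re \<zeta>) (Re \<zeta> + h) (Im \<zeta> + k) (Im \<zeta> + 2*k)"
        unfolding b2 by (simp add: algebra_simps)
      have c4: "B (\<zeta> + of_real h + \<i> * of_real k) (Suc n) = bd F (Re \<zeta> + h) (Re \<zeta> + 2*h) (Im \<zeta> + k) (Im \<zeta> + 2*k)"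
        unfolding b2 by (simp add: algebra_simps)
      show ?thesis unfolding b1 c1 c2 c3 c4 Q ..
    qed
    show ?thesis
    proof (cases "h = 0 \<or> k = 0")
      case True
      have "B \<zeta>' (Suc n) = 0" for \<zeta>'
        unfolding B_def bd_def hseg_def vseg_def using True by (auto simp: h_def k_def)
      moreover have "B \<zeta> n = 0"
        unfolding B_def bd_def hseg_def vseg_def using True e by auto
      ultimately show ?thesis by simp
    next
      case False
      hence "h > 0" "k > 0" using h0 by auto
      then show ?thesis unfolding cand_def h_def[symmetric] k_def[symmetric] q
        by (simp add: complex_eq_iff add.assoc)
    qed
  qed
  have ex: "\<exists>\<zeta>'. \<zeta>' \<in> cand \<zeta> n \<and> norm (B \<zeta> n) \<le> 4 * norm (B \<zeta>' (Suc n))" if "R \<zeta> n \<subseteq> U" for \<zeta> n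
  proof (rule ccontr)
    assume "\<not> ?thesis"
    hence lt: "norm (B \<zeta>' (Suc n)) < norm (B \<zeta> n) / 4" if "\<zeta>' \<in> cand \<zeta> n" for \<zeta>'
      using that by force
    have fin: "finite (cand \<zeta> n)" and cd4: "card (cand \<zeta> n) \<le> 4"
      unfolding cand_def by (auto intro: card4)
    have ne: "cand \<zeta> n \<noteq> {}" unfolding cand_def by auto
    have "norm (B \<zeta> n) \<le> (\<Sum>\<zeta>'\<in>cand \<zeta> n. norm (B \<zeta>' (Suc n)))"
      using quart[OF that] by (simp add: norm_sum)
    also have "\<dots> < (\<Sum>\<zeta>'\<in>cand \<zeta> n. norm (B \<zeta> n) / 4)"
      by (rule sum_strict_mono[OF fin ne lt])
    also have "\<dots> = card (cand \<zeta> n) * (norm (B \<zeta> n) / 4)" by simp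
    also have "\<dots> \<le> 4 * (norm (B \<zeta> n) / 4)"
      using cd4 by (intro mult_right_mono) auto
    finally show False by simp
  qed
  define nxt where "nxt n \<zeta> = (SOME \<zeta>'. \<zeta>' \<in> cand \<zeta> n \<and> norm (B \<zeta> n) \<le> 4 * norm (B \<zeta>' (Suc n)))" for n \<zeta>
  define C where "C = rec_nat (Complex a c) nxt"
  have C0: "C 0 = Complex a c" and CS: "C (Suc n) = nxt n (C n)" for n
    by (simp_all add: C_def)
  have R0: "R (C 0) 0 = rect a b c d" by (simp add: C0 R_def s_def t_def)
  have RU: "R (C n) n \<subseteq> U \<and> C (Suc n) \<in> cand (C n) n \<and> norm (B (C n) n) \<le> 4 * norm (B (C (Suc n)) (Suc n))" for n
  proof (induction n)
    case 0
    have "R (C 0) 0 \<subseteq> U" using R0 sub by simp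
    from someI_ex[OF ex[OF this]] show ?case using R0 sub by (simp add: CS nxt_def)
  next
    case (Suc n)
    then have "R (C (Suc n)) (Suc n) \<subseteq> U" using subc by blast
    from someI_ex[OF ex[OF this]] this show ?case by (simp add: CS[of "Suc n"] nxt_def)
  qed
  have nest: "R (C (Suc n)) (Suc n) \<subseteq> R (C n) n" for n using RU subc by blast
  have nest2: "m \<le> n \<Longrightarrow> R (C n) n \<subseteq> R (C m) m" for m n
    by (rule lift_Suc_antimono_le[of "\<lambda>n. R (C n) n"]) (use nest in auto)
  have grow: "norm (B (C 0) 0) \<le> 4^n * norm (B (C n) n)" for n
  proof (induction n)
    case (Suc n)
    have "(4::real)^n * norm (B (C n) n) \<le> 4^n * (4 * norm (B (C (Suc n)) (Suc n)))"
      using RU[of n] by (intro mult_left_mono) auto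
    moreover have "(4::real)^n * (4 * norm (B (C (Suc n)) (Suc n))) = 4^Suc n * norm (B (C (Suc n)) (Suc n))"
      by simp
    ultimately show ?case using Suc.IH by linarith
  qed simp
  have diam: "norm (x - y) \<le> (s + t) / 2^n" if "x \<in> R (C n) n" "y \<in> R (C n) n" for x y n
  proof -
    have "\<bar>Re (x - y)\<bar> \<le> s/2^n" "\<bar>Im (x - y)\<bar> \<le> t/2^n"
      using that by (auto simp: R_def rect_def)
    then show ?thesis using cmod_le[of "x - y"] by (simp add: add_divide_distrib)
  qed
  have small: "\<exists>n. (s + t) / 2^n < e" if "e > 0" for e
  proof -
    obtain n where "(s + t) / e < 2^n" using real_arch_pow[of 2 "(s+t)/e"] by auto
    then have "(s + t) < e * 2^n" using that by (simp add: divide_less_eq mult.commute)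
    then show ?thesis by (intro exI[of _ n]) (simp add: divide_less_eq mult.commute)
  qed
  obtain \<zeta> where \<zeta>: "\<And>n. \<zeta> \<in> R (C n) n"
  proof -
    have "\<exists>\<zeta>. \<forall>n. \<zeta> \<in> R (C n) n"
    proof (rule decreasing_closed_nest)
      show "closed (R (C n) n)" for n by (simp add: R_def closed_rect)
      show "R (C n) n \<noteq> {}" for n using s0 t0 by (auto simp: R_def rect_def intro!: exI[of _ "C n"])
      show "m \<le> n \<Longrightarrow> R (C n) n \<subseteq> R (C m) m" for m n by (rule nest2)
      show "\<exists>n. \<forall>x\<in>R (C n) n. \<forall>y\<in>R (C n) n. dist x y < e" if e0: "e > 0" for e
      proof -
        obtain n where "(s + t) / 2^n < e" using small[OF e0] by auto
        then show ?thesis using diam by (intro exI[of _ n]) (smt (verit) dist_norm)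
      qed
    qed blast
    then show ?thesis using that by blast
  qed
  have \<zeta>U: "\<zeta> \<in> U" using \<zeta>[of 0] RU[of 0] by blast
  obtain F' where F': "(F has_field_derivative F') (at \<zeta>)"
    using diff[OF \<zeta>U] by (auto simp: field_differentiable_def)
  define \<eta> where "\<eta> = norm (bd F a b c d)"
  have \<eta>0: "\<eta> > 0" using nz by (simp add: \<eta>_def)
  define \<epsilon> where "\<epsilon> = \<eta> / (4 * (s + t)^2 + 1)"
  have \<epsilon>0: "\<epsilon> > 0" using \<eta>0 unfolding \<epsilon>_def by (intro divide_pos_pos) (auto intro: add_nonneg_pos)
  obtain \<delta> where \<delta>0: "\<delta> > 0" and \<delta>: "\<And>y. norm (y - \<zeta>) < \<delta> \<Longrightarrow> norm (F y - F \<zeta> - F' * (y - \<zeta>)) \<le> \<epsilon> * norm (y - \<zeta>)"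
    using F' \<epsilon>0 unfolding has_field_derivative_def has_derivative_at_alt by meson
  obtain n where n: "(s + t) / 2^n < \<delta>" using small[OF \<delta>0] by auto
  define A where "A z = F \<zeta> + F' * (z - \<zeta>)" for z
  define a' b' c' d' where "a' = Re (C n)" "b' = Re (C n) + s/2^n" "c' = Im (C n)" "d' = Im (C n) + t/2^n"
  have Rn: "R (C n) n = rect a' b' c' d'" by (simp add: R_def a'_b'_c'_d'_def)
  have ab': "a' \<le> b'" "c' \<le> d'" using s0 t0 by (auto simp: a'_b'_c'_d'_def)
  have edU: "edges a' b' c' d' \<subseteq> U" using edges_sub[OF order.refl order.refl order.refl order.refl ab'] RU[of n] Rn by blast
  have contA: "continuous_on U A" unfolding A_def by (intro continuous_intros)
  have bdA: "bd A a' b' c' d' = 0"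
    by (rule bd_primitive[OF ab', of "\<lambda>z. F \<zeta> * z + F' * (z - \<zeta>)^2 / 2"])
       (auto simp: A_def intro!: derivative_eq_intros)
  have bound: "norm (F z - A z) \<le> \<epsilon> * ((s + t) / 2^n)" if "z \<in> edges a' b' c' d'" for z
  proof -
    have zR: "z \<in> R (C n) n" using that edges_sub[OF order.refl order.refl order.refl order.refl ab'] Rn by blast
    have "norm (z - \<zeta>) \<le> (s + t) / 2^n" using diam[OF zR \<zeta>[of n]] .
    then show ?thesis using \<delta>[of z] n \<epsilon>0 unfolding A_def
      by (smt (verit) mult_left_mono diff_diff_eq)
  qed
  have "B (C n) n = bd (\<lambda>z. F z - A z) a' b' c' d'"
    using bd_diff[OF contF contA edU] bdA by (simp add: B_def a'_b'_c'_d'_def)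
  hence "norm (B (C n) n) \<le> 2 * (\<epsilon> * ((s + t) / 2^n)) * ((b' - a') + (d' - c'))"
    using bd_bound[OF ab' continuous_on_diff[OF contF contA] edU, of "\<epsilon> * ((s + t) / 2^n)"] bound by auto
  also have "\<dots> = 2 * \<epsilon> * (s + t)^2 / 4^n"
    by (simp add: a'_b'_c'_d'_def power2_eq_square field_simps flip: power_mult_distrib)
  finally have "4^n * norm (B (C n) n) \<le> 2 * \<epsilon> * (s + t)^2"
    by (simp add: field_simps)
  moreover have "norm (B (C 0) 0) = \<eta>" by (simp add: B_def C0 \<eta>_def s_def t_def)
  ultimately have "\<eta> \<le> 2 * \<epsilon> * (s + t)^2" using grow[of n] by simp
  moreover have "2 * \<epsilon> * (s + t)^2 < \<eta>"
  proof -
    have "2 * \<epsilon> * (s + t)^2 = \<eta> * (2 * (s+t)^2 / (4 * (s + t)^2 + 1))"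
      by (simp add: \<epsilon>_def field_simps)
    also have "\<dots> < \<eta> * 1"
    proof (intro mult_strict_left_mono \<eta>0)
      have p: "4 * (s + t)^2 + 1 > 0" by (simp add: add_nonneg_pos)
      show "2 * (s+t)^2 / (4 * (s + t)^2 + 1) < 1"
        using p by (simp add: divide_less_eq)
    qed
    finally show ?thesis by simp
  qed
  ultimately show False by simp
qed

lemma edges_avoid:
  assumes "rect a b c d \<subseteq> U" "a \<le> x1" "x2 \<le> b" "c \<le> y1" "y2 \<le> d" "x1 \<le> x2" "y1 \<le> y2"
    "Re w \<noteq> x1" "Re w \<noteq> x2" "Im w \<noteq> y1" "Im w \<noteq> y2"
  shows "edges x1 x2 y1 y2 \<subseteq> U - {w}"
proof -
  have "edges x1 x2 y1 y2 \<subseteq> U" using edges_sub[OF assms(2-7)] assms(1) by blast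
  moreover have "w \<notin> edges x1 x2 y1 y2" using assms(8-11) by (auto simp: edges_def)
  ultimately show ?thesis by blast
qed

lemma cauchy_rect:
  fixes F :: "complex \<Rightarrow> complex"
  assumes U: "open U" and diff: "\<And>z. z \<in> U \<Longrightarrow> F field_differentiable (at z)"
    and sub: "rect a b c d \<subseteq> U" and w: "a < Re w" "Re w < b" "c < Im w" "Im w < d"
  shows "bd (\<lambda>\<zeta>. (F \<zeta> - F w) / (\<zeta> - w)) a b c d = 0"
proof (rule ccontr)
  define g where "g \<zeta> = (F \<zeta> - F w) / (\<zeta> - w)" for \<zeta>
  assume "bd (\<lambda>\<zeta>. (F \<zeta> - F w) / (\<zeta> - w)) a b c d \<noteq> 0"
  hence nz: "bd g a b c d \<noteq> 0" by (simp add: g_def[abs_def])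
  define U' where "U' = U - {w}"
  have U': "open U'" using U by (simp add: U'_def open_Diff)
  have gd: "g field_differentiable (at z)" if "z \<in> U'" for z
    unfolding g_def using diff[of z] that by (auto simp: U'_def intro!: derivative_intros)
  have contg: "continuous_on U' g"
    by (intro continuous_at_imp_continuous_on ballI field_differentiable_imp_continuous_at gd)
  obtain F' where F': "(F has_field_derivative F') (at w)"
  proof -
    have "w \<in> rect a b c d" using w by (simp add: rect_def)
    thus ?thesis using diff[of w] sub that by (auto simp: field_differentiable_def)
  qed
  obtain \<delta>0 where \<delta>0: "\<delta>0 > 0" and gb: "\<And>\<zeta>. \<zeta> \<noteq> w \<Longrightarrow> dist \<zeta> w < \<delta>0 \<Longrightarrow> norm (g \<zeta>) \<le> norm F' + 1"
  proof -
    have "((\<lambda>y. (F y - F w) / (y - w)) \<longlongrightarrow> F') (at w)" using F' by (simp add: has_field_derivative_iff)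
    hence "eventually (\<lambda>y. dist ((F y - F w) / (y - w)) F' < 1) (at w)"
      by (rule tendstoD) simp
    then obtain d where "d > 0" "\<And>y. y \<noteq> w \<Longrightarrow> dist y w < d \<Longrightarrow> dist (g y) F' < 1"
      unfolding eventually_at g_def by auto
    then show ?thesis using that[of d]
      by (smt (verit) dist_norm norm_triangle_ineq2)
  qed
  define M where "M = norm F' + 1"
  have M0: "M \<ge> 0" by (simp add: M_def)
  define \<eta> where "\<eta> = norm (bd g a b c d)"
  have \<eta>0: "\<eta> > 0" using nz by (simp add: \<eta>_def)
  define \<mu> where "\<mu> = min (min (Re w - a) (b - Re w)) (min (Im w - c) (d - Im w))"
  have \<mu>: "\<mu> \<le> Re w - a" "\<mu> \<le> b - Re w" "\<mu> \<le> Im w - c" "\<mu> \<le> d - Im w" "\<mu> > 0"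
    using w by (auto simp: \<mu>_def)
  define \<delta> where "\<delta> = min (\<mu> / 2) (min (\<delta>0 / 4) (\<eta> / (16 * (M + 1))))"
  have \<delta>pos: "\<delta> > 0" using \<mu> \<delta>0 \<eta>0 M0 by (simp add: \<delta>_def)
  have d3: "\<delta> \<le> \<mu> / 2" "\<delta> \<le> \<delta>0 / 4" "\<delta> \<le> \<eta> / (16 * (M + 1))" unfolding \<delta>_def by linarith+
  have \<delta>le: "\<delta> < Re w - a" "\<delta> < b - Re w" "\<delta> < Im w - c" "\<delta> < d - Im w" "\<delta> \<le> \<delta>0 / 4"
    "\<delta> \<le> \<eta> / (16 * (M + 1))"
    using \<mu> d3 by linarith+
  define m1 m2 n1 n2 where "m1 = Re w - \<delta>" "m2 = Re w + \<delta>" "n1 = Im w - \<delta>" "n2 = Im w + \<delta>"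
  have o: "a \<le> m1" "m1 \<le> m2" "m2 \<le> b" "c \<le> n1" "n1 \<le> n2" "n2 \<le> d"
    using \<delta>le \<delta>pos by (auto simp: m1_m2_n1_n2_def)
  have nw: "Re w \<noteq> a" "Re w \<noteq> b" "Re w \<noteq> m1" "Re w \<noteq> m2" "Im w \<noteq> c" "Im w \<noteq> d" "Im w \<noteq> n1" "Im w \<noteq> n2"
    using w \<delta>pos by (auto simp: m1_m2_n1_n2_def)
  note EA = edges_avoid[OF sub, where w=w, folded U'_def]
  have s1: "bd g a b c d = bd g a m1 c d + bd g m1 b c d"
    by (rule bd_split_x[OF _ _ contg EA EA]) (use o nw in auto)
  have s2: "bd g m1 b c d = bd g m1 m2 c d + bd g m2 b c d"
    by (rule bd_split_x[OF _ _ contg EA EA]) (use o nw in auto)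
  have s3: "bd g m1 m2 c d = bd g m1 m2 c n1 + bd g m1 m2 n1 d"
    by (rule bd_split_y[OF _ _ contg EA EA]) (use o nw in auto)
  have s4: "bd g m1 m2 n1 d = bd g m1 m2 n1 n2 + bd g m1 m2 n2 d"
    by (rule bd_split_y[OF _ _ contg EA EA]) (use o nw in auto)
  have G: "bd g x1 x2 y1 y2 = 0" if "rect x1 x2 y1 y2 \<subseteq> U'" "x1 \<le> x2" "y1 \<le> y2" for x1 x2 y1 y2
    using goursat[OF U' gd that] .
  have rs: "rect x1 x2 y1 y2 \<subseteq> U'" if "a \<le> x1" "x2 \<le> b" "c \<le> y1" "y2 \<le> d" "Re w < x1 \<or> Re w > x2 \<or> Im w < y1 \<or> Im w > y2" for x1 x2 y1 y2
  proof -
    have "rect x1 x2 y1 y2 \<subseteq> U" using rect_sub[OF that(1-4)] sub by blast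
    moreover have "w \<notin> rect x1 x2 y1 y2" using that(5) by (auto simp: rect_def)
    ultimately show ?thesis by (auto simp: U'_def)
  qed
  have z1: "bd g a m1 c d = 0" by (rule G[OF rs]) (use o \<delta>pos in \<open>auto simp: m1_m2_n1_n2_def\<close>)
  have z2: "bd g m2 b c d = 0" by (rule G[OF rs]) (use o \<delta>pos in \<open>auto simp: m1_m2_n1_n2_def\<close>)
  have z3: "bd g m1 m2 c n1 = 0" by (rule G[OF rs]) (use o \<delta>pos in \<open>auto simp: m1_m2_n1_n2_def\<close>)
  have z4: "bd g m1 m2 n2 d = 0" by (rule G[OF rs]) (use o \<delta>pos in \<open>auto simp: m1_m2_n1_n2_def\<close>)
  have eq: "bd g a b c d = bd g m1 m2 n1 n2" using s1 s2 s3 s4 z1 z2 z3 z4 by simp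
  have edc: "edges m1 m2 n1 n2 \<subseteq> U'" by (rule EA) (use o nw in auto)
  have bnd: "norm (g z) \<le> M" if "z \<in> edges m1 m2 n1 n2" for z
  proof -
    have zw: "z \<noteq> w" using that nw by (auto simp: edges_def)
    have "\<bar>Re (z - w)\<bar> \<le> \<delta>" "\<bar>Im (z - w)\<bar> \<le> \<delta>" using that by (auto simp: edges_def m1_m2_n1_n2_def)
    hence "norm (z - w) \<le> 2 * \<delta>" using cmod_le[of "z - w"] by simp
    hence "dist z w < \<delta>0" using \<delta>le \<delta>0 by (simp add: dist_norm)
    thus ?thesis using gb[OF zw] by (simp add: M_def)
  qed
  have "\<eta> \<le> 2 * M * ((m2 - m1) + (n2 - n1))"
    using bd_bound[OF o(2) o(5) contg edc] bnd eq by (simp add: \<eta>_def)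
  also have "\<dots> = 8 * M * \<delta>" by (simp add: m1_m2_n1_n2_def)
  also have "\<dots> \<le> 8 * M * (\<eta> / (16 * (M + 1)))"
    using \<delta>le M0 by (intro mult_left_mono) auto
  also have "\<dots> < \<eta>"
  proof -
    have "8 * M * (\<eta> / (16 * (M + 1))) = \<eta> * (M / (2 * (M + 1)))" using M0 by (simp add: field_simps)
    also have "\<dots> < \<eta> * 1" using M0 \<eta>0 by (intro mult_strict_left_mono) (auto simp: field_simps)
    finally show ?thesis by simp
  qed
  finally show False by simp
qed

definition Iq :: "nat \<Rightarrow> (real \<Rightarrow> complex) \<Rightarrow> (real \<Rightarrow> complex) \<Rightarrow> real \<Rightarrow> real \<Rightarrow> complex \<Rightarrow> complex" where
  "Iq n h \<gamma> a b w = integral {a..b} (\<lambda>t. h t / (\<gamma> t - w)^n)"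

lemma inv_pow_deriv:
  fixes c w :: complex
  assumes "c \<noteq> w"
  shows "((\<lambda>w. 1 / (c - w)^n) has_field_derivative of_nat n / (c - w)^Suc n) (at w)"
proof -
  have d: "((\<lambda>w. inverse (c - w)) has_field_derivative inverse (c - w) ^ 2) (at w)"
    using assms by (auto intro!: derivative_eq_intros simp: power2_eq_square field_simps)
  have "((\<lambda>w. inverse (c - w) ^ n) has_field_derivative of_nat n * (inverse (c - w) ^ 2 * inverse (c - w) ^ (n - Suc 0))) (at w)"
    by (rule DERIV_power[OF d])
  moreover have "of_nat n * (inverse (c - w) ^ 2 * inverse (c - w) ^ (n - Suc 0)) = of_nat n / (c - w)^Suc n"
  proof (cases n)
    case 0 then show ?thesis by simp
  next
    case (Suc m)
    then show ?thesis by (simp add: power2_eq_square divide_inverse power_inverse)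
  qed
  moreover have "(\<lambda>w. inverse (c - w) ^ n) = (\<lambda>w. 1 / (c - w)^n)"
    by (simp add: divide_inverse power_inverse)
  ultimately show ?thesis by simp
qed

lemma Iq_deriv:
  assumes ch: "continuous_on {a..b} h" and cg: "continuous_on {a..b} \<gamma>"
    and far: "\<forall>t\<in>{a..b}. dist (\<gamma> t) z0 \<ge> r" and w: "w \<in> ball z0 r"
  shows "((\<lambda>w. Iq n h \<gamma> a b w) has_field_derivative (of_nat n * Iq (Suc n) h \<gamma> a b w)) (at w)"
proof -
  have ne: "\<gamma> t - v \<noteq> 0" if "t \<in> {a..b}" "v \<in> ball z0 r" for t v
  proof
    assume "\<gamma> t - v = 0"
    then have "\<gamma> t = v" by simp
    with far that show False by (force simp: dist_commute)
  qed
  have ch2: "continuous_on (ball z0 r \<times> {a..b}) (\<lambda>x. h (snd x))"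
    by (rule continuous_on_compose2[OF ch]) (auto intro: continuous_intros)
  have cg2: "continuous_on (ball z0 r \<times> {a..b}) (\<lambda>x. \<gamma> (snd x))"
    by (rule continuous_on_compose2[OF cg]) (auto intro: continuous_intros)
  have "((\<lambda>w. integral (cbox a b) (\<lambda>t. h t / (\<gamma> t - w)^n)) has_field_derivative
        integral (cbox a b) (\<lambda>t. of_nat n * h t / (\<gamma> t - w)^Suc n)) (at w within ball z0 r)"
  proof (rule leibniz_rule_field_derivative[where U="ball z0 r"])
    fix x t assume x: "x \<in> ball z0 r" and t: "t \<in> cbox a b"
    have "\<gamma> t \<noteq> x" using ne[of t x] x t by auto
    from DERIV_cmult[OF inv_pow_deriv[OF this, of n], of "h t"]
    have "((\<lambda>x. h t * (1 / (\<gamma> t - x)^n)) has_field_derivative h t * (of_nat n / (\<gamma> t - x)^Suc n)) (at x)" .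
    moreover have "(\<lambda>x. h t * (1 / (\<gamma> t - x)^n)) = (\<lambda>x. h t / (\<gamma> t - x)^n)" by simp
    moreover have "h t * (of_nat n / (\<gamma> t - x)^Suc n) = of_nat n * h t / (\<gamma> t - x)^Suc n" by simp
    ultimately have "((\<lambda>x. h t / (\<gamma> t - x)^n) has_field_derivative of_nat n * h t / (\<gamma> t - x)^Suc n) (at x)"
      by metis
    then show "((\<lambda>x. h t / (\<gamma> t - x)^n) has_field_derivative of_nat n * h t / (\<gamma> t - x)^Suc n) (at x within ball z0 r)"
      by (auto intro: has_field_derivative_at_within simp: field_simps)
  next
    fix x assume x: "x \<in> ball z0 r"
    show "(\<lambda>t. h t / (\<gamma> t - x)^n) integrable_on cbox a b"
      using ne[OF _ x] by (auto intro!: integrable_continuous_real continuous_intros ch cg)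
  next
    show "continuous_on (ball z0 r \<times> cbox a b) (\<lambda>(x, t). of_nat n * h t / (\<gamma> t - x)^Suc n)"
      using ch2 cg2 ne by (auto simp: split_beta intro!: continuous_intros)
  qed (use w in auto)
  moreover have ieq: "integral {a..b} (\<lambda>t. of_nat n * h t / (\<gamma> t - w)^Suc n) = of_nat n * integral {a..b} (\<lambda>t. h t / (\<gamma> t - w)^Suc n)"
    by (simp only: integral_mult_right[symmetric] times_divide_eq_right)
  ultimately show ?thesis unfolding Iq_def box_real at_within_open[OF w open_ball] by metis
qed

definition Nn :: "nat \<Rightarrow> (complex \<Rightarrow> complex) \<Rightarrow> real \<Rightarrow> real \<Rightarrow> real \<Rightarrow> complex \<Rightarrow> complex" where
 "Nn n F x0 y0 \<rho> w = Iq n (\<lambda>x. F (Complex x (y0-\<rho>))) (\<lambda>x. Complex x (y0-\<rho>)) (x0-\<rho>) (x0+\<rho>) w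
   + \<i> * Iq n (\<lambda>y. F (Complex (x0+\<rho>) y)) (\<lambda>y. Complex (x0+\<rho>) y) (y0-\<rho>) (y0+\<rho>) w
   - Iq n (\<lambda>x. F (Complex x (y0+\<rho>))) (\<lambda>x. Complex x (y0+\<rho>)) (x0-\<rho>) (x0+\<rho>) w
   - \<i> * Iq n (\<lambda>y. F (Complex (x0-\<rho>) y)) (\<lambda>y. Complex (x0-\<rho>) y) (y0-\<rho>) (y0+\<rho>) w"

lemma bd_Nn: "bd (\<lambda>\<zeta>. F \<zeta> / (\<zeta> - w)^n) (x0-\<rho>) (x0+\<rho>) (y0-\<rho>) (y0+\<rho>) = Nn n F x0 y0 \<rho> w"
  by (simp add: bd_def hseg_def vseg_def Nn_def Iq_def)

lemma Nn_deriv: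
  assumes cF: "continuous_on (edges (x0-\<rho>) (x0+\<rho>) (y0-\<rho>) (y0+\<rho>)) F"
    and w: "w \<in> ball (Complex x0 y0) \<rho>"
  shows "((\<lambda>w. Nn n F x0 y0 \<rho> w) has_field_derivative of_nat n * Nn (Suc n) F x0 y0 \<rho> w) (at w)"
proof -
  let ?E = "edges (x0-\<rho>) (x0+\<rho>) (y0-\<rho>) (y0+\<rho>)"
  have \<rho>: "\<rho> > 0" using w zero_le_dist[of "Complex x0 y0" w] unfolding mem_ball by linarith
  have h1: "continuous_on {x0-\<rho>..x0+\<rho>} (\<lambda>x. F (Complex x e))" if "e = y0-\<rho> \<or> e = y0+\<rho>" for e
    by (rule continuous_on_compose2[OF cF cont_Complex1]) (use that in \<open>auto simp: edges_def\<close>)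
  have h2: "continuous_on {y0-\<rho>..y0+\<rho>} (\<lambda>y. F (Complex e y))" if "e = x0-\<rho> \<or> e = x0+\<rho>" for e
    by (rule continuous_on_compose2[OF cF cont_Complex2]) (use that in \<open>auto simp: edges_def\<close>)
  have f1: "\<forall>t\<in>{x0-\<rho>..x0+\<rho>}. dist (Complex t e) (Complex x0 y0) \<ge> \<rho>" if "e = y0-\<rho> \<or> e = y0+\<rho>" for e
  proof
    fix t
    have "\<bar>Im (Complex t e - Complex x0 y0)\<bar> \<le> cmod (Complex t e - Complex x0 y0)" by (rule abs_Im_le_cmod)
    then show "dist (Complex t e) (Complex x0 y0) \<ge> \<rho>" using that \<rho> by (auto simp: dist_norm)
  qed
  have f2: "\<forall>t\<in>{y0-\<rho>..y0+\<rho>}. dist (Complex e t) (Complex x0 y0) \<ge> \<rho>" if "e = x0-\<rho> \<or> e = x0+\<rho>" for e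
  proof
    fix t
    have "\<bar>Re (Complex e t - Complex x0 y0)\<bar> \<le> cmod (Complex e t - Complex x0 y0)" by (rule abs_Re_le_cmod)
    then show "dist (Complex e t) (Complex x0 y0) \<ge> \<rho>" using that \<rho> by (auto simp: dist_norm)
  qed
  note d1a = Iq_deriv[OF h1[OF disjI1[OF refl]] cont_Complex1 f1[OF disjI1[OF refl]] w, of n]
  note d1b = Iq_deriv[OF h1[OF disjI2[OF refl]] cont_Complex1 f1[OF disjI2[OF refl]] w, of n]
  note d2a = Iq_deriv[OF h2[OF disjI1[OF refl]] cont_Complex2 f2[OF disjI1[OF refl]] w, of n]
  note d2b = Iq_deriv[OF h2[OF disjI2[OF refl]] cont_Complex2 f2[OF disjI2[OF refl]] w, of n]
  have "((\<lambda>w. Nn n F x0 y0 \<rho> w) has_field_derivative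
     of_nat n * Iq (Suc n) (\<lambda>x. F (Complex x (y0-\<rho>))) (\<lambda>x. Complex x (y0-\<rho>)) (x0-\<rho>) (x0+\<rho>) w
   + \<i> * (of_nat n * Iq (Suc n) (\<lambda>y. F (Complex (x0+\<rho>) y)) (\<lambda>y. Complex (x0+\<rho>) y) (y0-\<rho>) (y0+\<rho>) w)
   - of_nat n * Iq (Suc n) (\<lambda>x. F (Complex x (y0+\<rho>))) (\<lambda>x. Complex x (y0+\<rho>)) (x0-\<rho>) (x0+\<rho>) w
   - \<i> * (of_nat n * Iq (Suc n) (\<lambda>y. F (Complex (x0-\<rho>) y)) (\<lambda>y. Complex (x0-\<rho>) y) (y0-\<rho>) (y0+\<rho>) w)) (at w)"
    unfolding Nn_def
    by (intro DERIV_add DERIV_diff DERIV_cmult d1a d1b d2a d2b)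
  then show ?thesis by (simp add: Nn_def algebra_simps)
qed

lemma int_Im_lb:
  assumes "continuous_on {a..b} f" "a \<le> b" "\<forall>t\<in>{a..b}. B \<le> Im (f t)"
  shows "B * (b - a) \<le> Im (integral {a..b} f)"
  using integral_component_lbound_real[OF integrable_continuous_real[OF assms(1)], of B \<i>] assms(2,3)
  by (simp add: content_real)
lemma int_Im_ub:
  assumes "continuous_on {a..b} f" "a \<le> b" "\<forall>t\<in>{a..b}. Im (f t) \<le> B"
  shows "Im (integral {a..b} f) \<le> B * (b - a)"
  using integral_component_ubound_real[OF integrable_continuous_real[OF assms(1)], of \<i> B] assms(2,3)
  by (simp add: content_real)
lemma int_Re_lb:
  assumes "continuous_on {a..b} f" "a \<le> b" "\<forall>t\<in>{a..b}. B \<le> Re (f t)"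
  shows "B * (b - a) \<le> Re (integral {a..b} f)"
  using integral_component_lbound_real[OF integrable_continuous_real[OF assms(1)], of B 1] assms(2,3)
  by (simp add: content_real)
lemma int_Re_ub:
  assumes "continuous_on {a..b} f" "a \<le> b" "\<forall>t\<in>{a..b}. Re (f t) \<le> B"
  shows "Re (integral {a..b} f) \<le> B * (b - a)"
  using integral_component_ubound_real[OF integrable_continuous_real[OF assms(1)], of 1 B] assms(2,3)
  by (simp add: content_real)

lemma Im_inv: "Im (1/z) = - Im z / ((Re z)^2 + (Im z)^2)"
  by (simp add: Im_divide power2_eq_square)
lemma Re_inv: "Re (1/z) = Re z / ((Re z)^2 + (Im z)^2)"
  by (simp add: Re_divide power2_eq_square)

lemma frac_lb:
  fixes p \<rho> :: real
  assumes "\<bar>p\<bar> \<le> \<rho>" "\<rho> > 0"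
  shows "1 / (2 * \<rho>) \<le> \<rho> / (p^2 + \<rho>^2)" "1 / (2 * \<rho>) \<le> \<rho> / (\<rho>^2 + p^2)"
proof -
  have "\<bar>p\<bar>^2 \<le> \<rho>^2" by (rule power_mono) (use assms in auto)
  hence "p^2 \<le> \<rho>^2" by simp
  moreover have "p^2 + \<rho>^2 > 0" using assms by (simp add: add_nonneg_pos)
  ultimately show "1 / (2 * \<rho>) \<le> \<rho> / (p^2 + \<rho>^2)" using assms by (simp add: divide_simps power2_eq_square)
  then show "1 / (2 * \<rho>) \<le> \<rho> / (\<rho>^2 + p^2)" by (simp add: add.commute)
qed

lemma J_nz:
  assumes \<rho>: "\<rho> > 0"
  shows "Im (Nn 1 (\<lambda>_. 1) x0 y0 \<rho> (Complex x0 y0)) \<ge> 4"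
proof -
  let ?z = "Complex x0 y0"
  have ne1: "Complex t e - ?z \<noteq> 0" if "e = y0 - \<rho> \<or> e = y0 + \<rho>" for t e
    using that \<rho> by (auto simp: complex_eq_iff)
  have ne2: "Complex e t - ?z \<noteq> 0" if "e = x0 - \<rho> \<or> e = x0 + \<rho>" for t e
    using that \<rho> by (auto simp: complex_eq_iff)
  have c1: "continuous_on A (\<lambda>t. 1 / (Complex t e - ?z)^1)" if "e = y0 - \<rho> \<or> e = y0 + \<rho>" for e A
    using ne1[OF that] unfolding Complex_eq by (auto intro!: continuous_intros)
  have c2: "continuous_on A (\<lambda>t. 1 / (Complex e t - ?z)^1)" if "e = x0 - \<rho> \<or> e = x0 + \<rho>" for e A
    using ne2[OF that] unfolding Complex_eq by (auto intro!: continuous_intros)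
  have ab: "x0 - \<rho> \<le> x0 + \<rho>" "y0 - \<rho> \<le> y0 + \<rho>" using \<rho> by auto
  have L: "1 / (2 * \<rho>) * ((x0 + \<rho>) - (x0 - \<rho>)) = 1" "1 / (2 * \<rho>) * ((y0 + \<rho>) - (y0 - \<rho>)) = 1"
    using \<rho> by auto
  have I1: "1 \<le> Im (Iq 1 (\<lambda>_. 1) (\<lambda>x. Complex x (y0-\<rho>)) (x0-\<rho>) (x0+\<rho>) ?z)"
  proof -
    have "1 / (2 * \<rho>) * ((x0 + \<rho>) - (x0 - \<rho>)) \<le> Im (Iq 1 (\<lambda>_. 1) (\<lambda>x. Complex x (y0-\<rho>)) (x0-\<rho>) (x0+\<rho>) ?z)"
      unfolding Iq_def
    proof (rule int_Im_lb[OF c1 ab(1)])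
      show "\<forall>t\<in>{x0 - \<rho>..x0 + \<rho>}. 1 / (2 * \<rho>) \<le> Im (1 / (Complex t (y0 - \<rho>) - ?z) ^ 1)"
        using frac_lb[OF _ \<rho>] by (auto simp: Im_inv abs_le_iff)
    qed simp
    thus ?thesis using L by simp
  qed
  have I2: "1 \<le> Re (Iq 1 (\<lambda>_. 1) (\<lambda>y. Complex (x0+\<rho>) y) (y0-\<rho>) (y0+\<rho>) ?z)"
  proof -
    have "1 / (2 * \<rho>) * ((y0 + \<rho>) - (y0 - \<rho>)) \<le> Re (Iq 1 (\<lambda>_. 1) (\<lambda>y. Complex (x0+\<rho>) y) (y0-\<rho>) (y0+\<rho>) ?z)"
      unfolding Iq_def
    proof (rule int_Re_lb[OF c2 ab(2)])
      show "\<forall>t\<in>{y0 - \<rho>..y0 + \<rho>}. 1 / (2 * \<rho>) \<le> Re (1 / (Complex (x0 + \<rho>) t - ?z) ^ 1)"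
        using frac_lb[OF _ \<rho>] by (auto simp: Re_inv abs_le_iff)
    qed simp
    thus ?thesis using L by simp
  qed
  have I3: "Im (Iq 1 (\<lambda>_. 1) (\<lambda>x. Complex x (y0+\<rho>)) (x0-\<rho>) (x0+\<rho>) ?z) \<le> -1"
  proof -
    have "Im (Iq 1 (\<lambda>_. 1) (\<lambda>x. Complex x (y0+\<rho>)) (x0-\<rho>) (x0+\<rho>) ?z) \<le> - (1 / (2 * \<rho>)) * ((x0 + \<rho>) - (x0 - \<rho>))"
      unfolding Iq_def
    proof (rule int_Im_ub[OF c1 ab(1)])
      show "\<forall>t\<in>{x0 - \<rho>..x0 + \<rho>}. Im (1 / (Complex t (y0 + \<rho>) - ?z) ^ 1) \<le> - (1 / (2 * \<rho>))"
        using frac_lb[OF _ \<rho>] by (auto simp: Im_inv abs_le_iff)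
    qed simp
    thus ?thesis using L by simp
  qed
  have I4: "Re (Iq 1 (\<lambda>_. 1) (\<lambda>y. Complex (x0-\<rho>) y) (y0-\<rho>) (y0+\<rho>) ?z) \<le> -1"
  proof -
    have "Re (Iq 1 (\<lambda>_. 1) (\<lambda>y. Complex (x0-\<rho>) y) (y0-\<rho>) (y0+\<rho>) ?z) \<le> - (1 / (2 * \<rho>)) * ((y0 + \<rho>) - (y0 - \<rho>))"
      unfolding Iq_def
    proof (rule int_Re_ub[OF c2 ab(2)])
      show "\<forall>t\<in>{y0 - \<rho>..y0 + \<rho>}. Re (1 / (Complex (x0 - \<rho>) t - ?z) ^ 1) \<le> - (1 / (2 * \<rho>))"
        using frac_lb[OF _ \<rho>] by (auto simp: Re_inv abs_le_iff)
    qed simp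
    thus ?thesis using L by simp
  qed
  show ?thesis using I1 I2 I3 I4 by (simp add: Nn_def)
qed

lemma holo_deriv_diff:
  fixes F :: "complex \<Rightarrow> complex"
  assumes U: "open U" and diff: "\<And>z. z \<in> U \<Longrightarrow> F field_differentiable (at z)" and z0: "z0 \<in> U"
  shows "deriv F field_differentiable (at z0)"
proof -
  obtain e where e: "e > 0" "ball z0 e \<subseteq> U" using U z0 open_contains_ball by blast
  define \<rho> where "\<rho> = e / 3"
  have \<rho>: "\<rho> > 0" using e by (simp add: \<rho>_def)
  define x0 y0 where "x0 = Re z0" "y0 = Im z0"
  have z0eq: "Complex x0 y0 = z0" by (simp add: x0_y0_def)
  have rectU: "rect (x0-\<rho>) (x0+\<rho>) (y0-\<rho>) (y0+\<rho>) \<subseteq> U"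
  proof
    fix z assume "z \<in> rect (x0-\<rho>) (x0+\<rho>) (y0-\<rho>) (y0+\<rho>)"
    then have "\<bar>Re (z0 - z)\<bar> \<le> \<rho>" "\<bar>Im (z0 - z)\<bar> \<le> \<rho>" by (auto simp: rect_def x0_y0_def)
    then have "norm (z0 - z) \<le> 2 * \<rho>" using cmod_le[of "z0 - z"] by simp
    then have "z \<in> ball z0 e" using e by (simp add: dist_norm \<rho>_def)
    then show "z \<in> U" using e by blast
  qed
  have contF: "continuous_on U F"
    by (intro continuous_at_imp_continuous_on ballI field_differentiable_imp_continuous_at diff)
  have edU: "edges (x0-\<rho>) (x0+\<rho>) (y0-\<rho>) (y0+\<rho>) \<subseteq> U"
    using edges_sub[of "x0-\<rho>" "x0-\<rho>" "x0+\<rho>" "x0+\<rho>" "y0-\<rho>" "y0-\<rho>" "y0+\<rho>" "y0+\<rho>"] \<rho> rectU by auto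
  have cE: "continuous_on (edges (x0-\<rho>) (x0+\<rho>) (y0-\<rho>) (y0+\<rho>)) F"
    using continuous_on_subset[OF contF edU] .
  have cE1: "continuous_on (edges (x0-\<rho>) (x0+\<rho>) (y0-\<rho>) (y0+\<rho>)) (\<lambda>_. 1)" by simp
  define J where "J = Nn 1 (\<lambda>_. 1) x0 y0 \<rho>"
  define N where "N = Nn 1 F x0 y0 \<rho>"
  have ball': "ball z0 \<rho> = ball (Complex x0 y0) \<rho>" by (simp add: z0eq)
  have key: "N w = F w * J w" if w: "w \<in> ball z0 \<rho>" for w
  proof -
    have "\<bar>Re (z0 - w)\<bar> < \<rho>" "\<bar>Im (z0 - w)\<bar> < \<rho>"
      using w abs_Re_le_cmod[of "z0 - w"] abs_Im_le_cmod[of "z0 - w"] by (auto simp: dist_norm)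
    then have wr: "x0 - \<rho> < Re w" "Re w < x0 + \<rho>" "y0 - \<rho> < Im w" "Im w < y0 + \<rho>"
      by (auto simp: x0_y0_def)
    have C: "bd (\<lambda>\<zeta>. (F \<zeta> - F w) / (\<zeta> - w)) (x0-\<rho>) (x0+\<rho>) (y0-\<rho>) (y0+\<rho>) = 0"
      by (rule cauchy_rect[OF U diff rectU wr])
    have eqf: "(\<lambda>\<zeta>. (F \<zeta> - F w) / (\<zeta> - w)) = (\<lambda>\<zeta>. F \<zeta> / (\<zeta> - w)^1 - F w * (1 / (\<zeta> - w)^1))"
      by (simp add: diff_divide_distrib)
    have c1: "continuous_on (U - {w}) (\<lambda>\<zeta>. F \<zeta> / (\<zeta> - w)^1)"
      using continuous_on_subset[OF contF, of "U - {w}"] by (auto intro!: continuous_intros)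
    have c2: "continuous_on (U - {w}) (\<lambda>\<zeta>. F w * (1 / (\<zeta> - w)^1))"
      by (auto intro!: continuous_intros)
    have ed: "edges (x0-\<rho>) (x0+\<rho>) (y0-\<rho>) (y0+\<rho>) \<subseteq> U - {w}"
      by (rule edges_avoid[OF rectU]) (use wr \<rho> in auto)
    have "0 = bd (\<lambda>\<zeta>. F \<zeta> / (\<zeta> - w)^1) (x0-\<rho>) (x0+\<rho>) (y0-\<rho>) (y0+\<rho>)
            - bd (\<lambda>\<zeta>. F w * (1 / (\<zeta> - w)^1)) (x0-\<rho>) (x0+\<rho>) (y0-\<rho>) (y0+\<rho>)"
      using C bd_diff[OF c1 c2 ed] unfolding eqf by simp
    also have "\<dots> = N w - F w * J w"
      unfolding bd_cmult N_def J_def bd_Nn[symmetric] by simp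
    finally show ?thesis by simp
  qed
  have dN: "((\<lambda>w. Nn k G x0 y0 \<rho> w) has_field_derivative of_nat k * Nn (Suc k) G x0 y0 \<rho> w) (at w)"
    if "w \<in> ball z0 \<rho>" "continuous_on (edges (x0-\<rho>) (x0+\<rho>) (y0-\<rho>) (y0+\<rho>)) G" for w k G
    by (rule Nn_deriv[OF that(2)]) (use that ball' in auto)
  have fdN: "(\<lambda>w. Nn k G x0 y0 \<rho> w) field_differentiable (at z0)"
    if "continuous_on (edges (x0-\<rho>) (x0+\<rho>) (y0-\<rho>) (y0+\<rho>)) G" for k G
    using dN[OF _ that, of z0 k] \<rho> by (auto simp: field_differentiable_def)
  have Jz0: "J z0 \<noteq> 0"
  proof
    assume "J z0 = 0"
    with J_nz[OF \<rho>, of x0 y0] show False by (simp add: J_def z0eq)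
  qed
  have "isCont J z0"
    using DERIV_isCont[OF dN[OF _ cE1, of z0 1]] \<rho> by (simp add: J_def)
  then obtain e2 where e2: "e2 > 0" "\<And>y. dist z0 y < e2 \<Longrightarrow> J y \<noteq> 0"
    using continuous_at_avoid[of z0 J 0] Jz0 by auto
  define r where "r = min \<rho> e2"
  have r: "r > 0" using \<rho> e2 by (simp add: r_def)
  define D where "D w = (Nn 2 F x0 y0 \<rho> w * J w - N w * Nn 2 (\<lambda>_. 1) x0 y0 \<rho> w) / (J w * J w)" for w
  have dF: "deriv F w = D w" if w: "w \<in> ball z0 r" for w
  proof -
    have w1: "w \<in> ball z0 \<rho>" and Jw: "J w \<noteq> 0" using w e2 by (auto simp: r_def)
    have "((\<lambda>w. N w / J w) has_field_derivative D w) (at w)"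
      using DERIV_divide[OF dN[OF w1 cE, of 1] dN[OF w1 cE1, of 1] ] Jw
      by (simp add: D_def N_def J_def numeral_2_eq_2)
    moreover have "N y / J y = F y" if "y \<in> ball z0 r" for y
    proof -
      have "y \<in> ball z0 \<rho>" "J y \<noteq> 0" using that e2 by (auto simp: r_def)
      then show ?thesis using key by simp
    qed
    ultimately have "(F has_field_derivative D w) (at w)"
      using has_field_derivative_transform_within_open[of _ _ w "ball z0 r"] w by auto
    then show ?thesis by (rule DERIV_imp_deriv)
  qed
  have "D field_differentiable (at z0)"
    unfolding D_def[abs_def] N_def J_def
    by (intro field_differentiable_divide field_differentiable_diff field_differentiable_mult fdN cE cE1)
       (use Jz0 in \<open>simp add: J_def\<close>)
  then show ?thesis
    using field_differentiable_transform_within[of r z0 UNIV D "deriv F"] r dF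
    by (auto simp: dist_commute)
qed


lemma dd_hasderiv:
  assumes "(f has_derivative f') (at z)"
  shows "dd f v z = f' v"
proof -
  have l: "linear f'" using assms by (rule has_derivative_linear)
  have 1: "((\<lambda>t::real. z + t *\<^sub>R v) has_derivative (\<lambda>t. t *\<^sub>R v)) (at 0)"
    by (auto intro!: derivative_eq_intros)
  have 2: "(f has_derivative f') (at (z + 0 *\<^sub>R v))" using assms by simp
  have "((\<lambda>t. f (z + t *\<^sub>R v)) has_derivative (\<lambda>t. f' (t *\<^sub>R v))) (at 0)"
    by (rule has_derivative_compose[OF 1 2])
  then have "((\<lambda>t. f (z + t *\<^sub>R v)) has_vector_derivative f' v) (at 0)"
    unfolding has_vector_derivative_def using linear_scale[OF l] by simp
  then show ?thesis unfolding dd_def by (rule vector_derivative_at)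
qed

definition wd1 :: "(complex \<Rightarrow> complex) \<Rightarrow> complex \<Rightarrow> complex \<Rightarrow> complex \<Rightarrow> bool" where
  "wd1 f a c z \<longleftrightarrow> (f has_derivative (\<lambda>h. a * h + c * cnj h)) (at z)"

lemma wd1_wz:
  assumes "wd1 f a c z"
  shows "wz f z = a" "wzb f z = c"
proof -
  have "dd f v z = a * v + c * cnj v" for v using dd_hasderiv assms by (simp add: wd1_def)
  then show "wz f z = a" "wzb f z = c" unfolding wz_def wzb_def by (simp_all add: field_simps)
qed

lemma wd1_diffble:
  fixes f :: "complex \<Rightarrow> complex"
  assumes "f differentiable (at z)"
  shows "wd1 f (wz f z) (wzb f z) z"
proof -
  obtain f' where D: "(f has_derivative f') (at z)" using assms by (auto simp: differentiable_def)
  have l: "linear f'" using D by (rule has_derivative_linear)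
  have dd: "dd f v z = f' v" for v by (rule dd_hasderiv[OF D])
  have decomp: "f' h = of_real (Re h) * f' 1 + of_real (Im h) * f' \<i>" for h
  proof -
    have "h = Re h *\<^sub>R 1 + Im h *\<^sub>R \<i>" by (simp add: complex_eq_iff)
    then have "f' h = f' (Re h *\<^sub>R 1 + Im h *\<^sub>R \<i>)" by simp
    also have "\<dots> = Re h *\<^sub>R f' 1 + Im h *\<^sub>R f' \<i>" using l by (simp add: linear_add linear_scale)
    finally show ?thesis by (simp add: scaleR_conv_of_real)
  qed
  have "f' = (\<lambda>h. wz f z * h + wzb f z * cnj h)"
  proof
    fix h
    have "wz f z * h + wzb f z * cnj h = ((f' 1 - \<i> * f' \<i>) * h + (f' 1 + \<i> * f' \<i>) * cnj h) / 2"
      unfolding wz_def wzb_def dd by (simp add: field_simps)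
    also have "\<dots> = f' 1 * ((h + cnj h)/2) + f' \<i> * (\<i> * (cnj h - h) / 2)"
      by (simp add: field_simps)
    also have "\<dots> = of_real (Re h) * f' 1 + of_real (Im h) * f' \<i>"
    proof -
      have e1: "(h + cnj h)/2 = of_real (Re h)" by (simp add: complex_eq_iff)
      have e2: "\<i> * (cnj h - h) / 2 = of_real (Im h)" by (simp add: complex_eq_iff)
      show ?thesis unfolding e1 e2 by (simp only: mult.commute)
    qed
    finally show "f' h = wz f z * h + wzb f z * cnj h" using decomp[of h] by simp
  qed
  then show ?thesis using D by (simp add: wd1_def)
qed

lemma wd1_cong:
  assumes "wd1 f a c z" "\<And>w. f w = g w" "a = a'" "c = c'"
  shows "wd1 g a' c' z"
proof -
  have "f = g" using assms(2) by auto
  then show ?thesis using assms by simp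
qed

lemma wd1_transform:
  assumes "wd1 f a c z" "open T" "z \<in> T" "\<And>w. w \<in> T \<Longrightarrow> f w = g w"
  shows "wd1 g a c z"
  using assms has_derivative_transform_within_open unfolding wd1_def by blast

lemma wd1_const: "wd1 (\<lambda>w. k) 0 0 z"
  by (simp add: wd1_def)
lemma wd1_id: "wd1 (\<lambda>w. w) 1 0 z"
  by (simp add: wd1_def has_derivative_ident)
lemma wd1_cnjid: "wd1 (\<lambda>w. cnj w) 0 1 z"
  unfolding wd1_def by (simp add: bounded_linear.has_derivative[OF bounded_linear_cnj has_derivative_ident])

lemma wd1_add:
  assumes "wd1 f a1 c1 z" "wd1 g a2 c2 z"
  shows "wd1 (\<lambda>w. f w + g w) (a1 + a2) (c1 + c2) z"
  using has_derivative_add[OF assms[unfolded wd1_def]] unfolding wd1_def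
  by (simp add: algebra_simps)

lemma wd1_sub:
  assumes "wd1 f a1 c1 z" "wd1 g a2 c2 z"
  shows "wd1 (\<lambda>w. f w - g w) (a1 - a2) (c1 - c2) z"
  using has_derivative_diff[OF assms[unfolded wd1_def]] unfolding wd1_def
  by (simp add: algebra_simps)

lemma wd1_mult:
  assumes "wd1 f a1 c1 z" "wd1 g a2 c2 z"
  shows "wd1 (\<lambda>w. f w * g w) (f z * a2 + a1 * g z) (f z * c2 + c1 * g z) z"
  using has_derivative_mult[OF assms[unfolded wd1_def]] unfolding wd1_def
  by (simp add: algebra_simps)

lemma wd1_cnj:
  assumes "wd1 f a c z"
  shows "wd1 (\<lambda>w. cnj (f w)) (cnj c) (cnj a) z"
  using bounded_linear.has_derivative[OF bounded_linear_cnj assms[unfolded wd1_def]] unfolding wd1_def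
  by (simp add: algebra_simps)

lemma wd1_comp:
  assumes "(h has_field_derivative d) (at (f z))" "wd1 f a c z"
  shows "wd1 (\<lambda>w. h (f w)) (d * a) (d * c) z"
  using has_derivative_compose[OF assms(2)[unfolded wd1_def] assms(1)[unfolded has_field_derivative_def]]
  unfolding wd1_def by (simp add: algebra_simps)

lemma wd1_field:
  assumes "(f has_field_derivative d) (at z)"
  shows "wd1 f d 0 z"
  using assms unfolding wd1_def has_field_derivative_def by simp

lemma wd1_Im:
  assumes "(\<phi> has_vector_derivative d) (at (Im z))"
  shows "wd1 (\<lambda>w. \<phi> (Im w)) (- (\<i>/2) * d) ((\<i>/2) * d) z"
proof -
  have 1: "(Im has_derivative Im) (at z)" by (rule bounded_linear_imp_has_derivative[OF bounded_linear_Im])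
  have "((\<lambda>w. \<phi> (Im w)) has_derivative (\<lambda>h. Im h *\<^sub>R d)) (at z)"
    using has_derivative_compose[OF 1 assms[unfolded has_vector_derivative_def]] .
  moreover have "Im h *\<^sub>R d = - (\<i>/2) * d * h + (\<i>/2) * d * cnj h" for h
  proof -
    have e: "complex_of_real (Im h) = - (\<i>/2) * h + (\<i>/2) * cnj h" by (simp add: complex_eq_iff)
    have "Im h *\<^sub>R d = complex_of_real (Im h) * d" by (simp add: scaleR_conv_of_real)
    also have "\<dots> = (- (\<i>/2) * h + (\<i>/2) * cnj h) * d" by (simp only: e)
    also have "\<dots> = - (\<i>/2) * d * h + (\<i>/2) * d * cnj h" by (simp only: algebra_simps)
    finally show ?thesis .
  qed
  ultimately show ?thesis unfolding wd1_def by simp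
qed

lemma Wq_wz: "Wq f p = wz (\<lambda>w. f (w, snd p)) (fst p)"
  unfolding Wq_def wz_def dd_def by (cases p) simp
lemma Wqb_wzb: "Wqb f p = wzb (\<lambda>w. f (w, snd p)) (fst p)"
  unfolding Wqb_def wzb_def dd_def by (cases p) simp
lemma Wz_wz: "Wz f p = wz (\<lambda>w. f (fst p, w)) (snd p)"
  unfolding Wz_def wz_def dd_def by (cases p) simp
lemma Wzb_wzb: "Wzb f p = wzb (\<lambda>w. f (fst p, w)) (snd p)"
  unfolding Wzb_def wzb_def dd_def by (cases p) simp


lemma log_deriv:
  fixes f \<phi> :: "complex \<Rightarrow> complex"
  assumes T: "open T" "x \<in> T" and cf: "continuous_on T f" and ef: "\<And>w. w \<in> T \<Longrightarrow> exp (f w) = \<phi> w"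
    and d\<phi>: "(\<phi> has_field_derivative d) (at x)"
  shows "(f has_field_derivative d / \<phi> x) (at x)"
proof -
  have \<phi>x: "\<phi> x \<noteq> 0" using ef[OF T(2)] exp_not_eq_zero by metis
  define T' where "T' = f -` ball (f x) pi \<inter> T"
  have T': "open T'" using continuous_on_open_vimage[OF T(1)] cf unfolding T'_def by auto
  have xT': "x \<in> T'" using T by (simp add: T'_def)
  have eq: "f x + Ln (\<phi> w / \<phi> x) = f w" if "w \<in> T'" for w
  proof -
    have wT: "w \<in> T" and wd: "dist (f x) (f w) < pi" using that by (auto simp: T'_def)
    have "exp (f w - f x) = \<phi> w / \<phi> x" using ef wT T(2) by (simp add: exp_diff)
    moreover have "\<bar>Im (f w - f x)\<bar> < pi"
      using abs_Im_le_cmod[of "f w - f x"] wd by (simp add: dist_norm norm_minus_commute)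
    ultimately have "Ln (\<phi> w / \<phi> x) = f w - f x" using Ln_exp[of "f w - f x"] by auto
    thus ?thesis by simp
  qed
  have dL: "(Ln has_field_derivative inverse (\<phi> x / \<phi> x)) (at (\<phi> x / \<phi> x))"
    by (rule has_field_derivative_Ln) (simp add: \<phi>x complex_nonpos_Reals_iff)
  have dq: "((\<lambda>w. \<phi> w / \<phi> x) has_field_derivative d / \<phi> x) (at x)"
    using d\<phi> \<phi>x by (auto intro!: derivative_eq_intros)
  have "((\<lambda>w. f x + Ln (\<phi> w / \<phi> x)) has_field_derivative 0 + inverse (\<phi> x / \<phi> x) * (d / \<phi> x)) (at x)"
    by (intro DERIV_add DERIV_const DERIV_chain2[OF dL dq])
  then have "((\<lambda>w. f x + Ln (\<phi> w / \<phi> x)) has_field_derivative d / \<phi> x) (at x)"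
    using \<phi>x by simp
  then show ?thesis
    by (rule has_field_derivative_transform_within_open[OF _ T' xT']) (use eq in auto)
qed

lemma s_notin: "Re z > 0 \<Longrightarrow> z + cnj z \<notin> \<real>\<^sub>\<le>\<^sub>0"
  by (simp add: complex_nonpos_Reals_iff)

definition psi0 :: "(complex \<Rightarrow> complex) \<Rightarrow> (complex \<times> complex \<Rightarrow> complex) \<Rightarrow> (complex \<Rightarrow> real)
    \<Rightarrow> complex \<times> complex \<Rightarrow> complex" where
  "psi0 b L G p = (fst p + b (snd p)) * L p + (cnj (fst p) + cnj (b (snd p))) * cnj (L p)
      - (fst p + cnj (fst p)) * (Ln (snd p + cnj (snd p)) + 1) + of_real (G (snd p))"

lemma open_slice1: "open S \<Longrightarrow> open {w. (w, z) \<in> S}"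
proof -
  assume "open S"
  then have "open ((\<lambda>w. (w, z)) -` S)" by (intro open_vimage) (auto intro!: continuous_intros)
  then show ?thesis by (simp add: vimage_def)
qed
lemma open_slice2: "open S \<Longrightarrow> open {w. (q, w) \<in> S}"
proof -
  assume "open S"
  then have "open ((\<lambda>w. (q, w)) -` S)" by (intro open_vimage) (auto intro!: continuous_intros)
  then show ?thesis by (simp add: vimage_def)
qed

lemma final_alg:
  fixes U V s A k bb :: complex
  assumes "U \<noteq> 0" "V \<noteq> 0" "s \<noteq> 0" "k + bb = U + V"
  shows "A * (k * inverse s ^ 2 + bb / s ^ 2) - inverse s ^ 2 = U * V / s ^ 2 * (A ^ 2 - (1 / U - A) * (1 / V - A))"
proof -
  have "A * (k * inverse s ^ 2 + bb / s ^ 2) - inverse s ^ 2 = (A * (k + bb) - 1) / s^2"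
    using assms by (simp add: field_simps power2_eq_square)
  also have "\<dots> = (A * (U + V) - 1) / s^2" using assms(4) by simp
  also have "\<dots> = U * V / s ^ 2 * (A ^ 2 - (1 / U - A) * (1 / V - A))"
    using assms by (simp add: field_simps power2_eq_square)
  finally show ?thesis .
qed

lemma core:
  fixes S :: "(complex \<times> complex) set" and b :: "complex \<Rightarrow> complex" and L :: "complex \<times> complex \<Rightarrow> complex"
    and G :: "complex \<Rightarrow> real" and \<Phi> g gyy C D Cz gz gzb :: "real \<Rightarrow> complex \<Rightarrow> complex"
  assumes S_open: "open S"
    and S_pos: "\<forall>p\<in>S. Re (snd p) > 0"
    and b_hol: "b holomorphic_on (snd ` S)"
    and L_cont: "continuous_on S L"
    and L_log: "\<forall>p\<in>S. exp (L p) = fst p + b (snd p)"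
    and G_diff: "\<forall>z\<in>snd ` S. G differentiable (at z)"
    and G_diff2: "\<forall>v. \<forall>z\<in>snd ` S. (dd G v) differentiable (at z)"
    and G_eq: "\<forall>z\<in>snd ` S. wzb (wz (\<lambda>w. complex_of_real (G w))) z
                 = (b z + cnj (b z)) / (z + cnj z)\<^sup>2"
    and H1: "\<And>q z. (q, z) \<in> S \<Longrightarrow> ((\<lambda>y. \<Phi> y z) has_vector_derivative g (Im q) z) (at (Im q))"
    and H2: "\<And>q z. (q, z) \<in> S \<Longrightarrow> ((\<lambda>y. g y z) has_vector_derivative gyy (Im q) z) (at (Im q))"
    and H3: "\<And>q z. (q, z) \<in> S \<Longrightarrow> wd1 (\<lambda>w. \<Phi> (Im q) w) (C (Im q) z) (D (Im q) z) z"
    and H4: "\<And>q z. (q, z) \<in> S \<Longrightarrow> wd1 (\<lambda>w. C (Im q) w) (Cz (Im q) z) 0 z"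
    and H5: "\<And>q z. (q, z) \<in> S \<Longrightarrow> wd1 (\<lambda>w. g (Im q) w) (gz (Im q) z) (gzb (Im q) z) z"
    and H6: "\<And>q z. (q, z) \<in> S \<Longrightarrow> (- inverse (z + cnj z) - \<i>/2 * gzb (Im q) z) * (- inverse (z + cnj z) + \<i>/2 * gz (Im q) z)
               = inverse (z + cnj z) ^ 2"
  shows "solves S (\<lambda>p. psi0 b L G p + \<Phi> (Im (fst p)) (snd p))"
proof -
  define \<psi> where "\<psi> p = psi0 b L G p + \<Phi> (Im (fst p)) (snd p)" for p
  define Gc where "Gc w = complex_of_real (G w)" for w
  define Sz where "Sz = snd ` S"
  have Sz: "open Sz" using open_image_snd[OF S_open] by (simp add: Sz_def)
  have zSz: "z \<in> Sz" if "(q, z) \<in> S" for q z using that by (force simp: Sz_def)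
  have zpos: "Re z > 0" if "(q, z) \<in> S" for q z using that S_pos by force
  have s0: "z + cnj z \<noteq> 0" if "(q, z) \<in> S" for q z using zpos[OF that] by (simp add: complex_eq_iff)
  have u0: "q + b z \<noteq> 0" if "(q, z) \<in> S" for q z
    using L_log that exp_not_eq_zero by (metis fst_conv snd_conv)
  have bhol: "b holomorphic_on Sz" using b_hol by (simp add: Sz_def)
  have bd1: "(b has_field_derivative deriv b z) (at z)" if "z \<in> Sz" for z
    using holomorphic_derivI[OF bhol Sz that, of UNIV] by simp
  have bd2: "(deriv b has_field_derivative deriv (deriv b) z) (at z)" if "z \<in> Sz" for z
  proof -
    have "deriv b field_differentiable (at z)"
      by (rule holo_deriv_diff[OF Sz _ that]) (use holomorphic_on_imp_differentiable_at[OF bhol Sz] in auto)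
    then show ?thesis using DERIV_deriv_iff_field_differentiable by blast
  qed
  have Lq: "((\<lambda>w. L (w, z)) has_field_derivative 1 / (q + b z)) (at q)" if "(q, z) \<in> S" for q z
  proof -
    have "((\<lambda>w. L (w, z)) has_field_derivative 1 / ((\<lambda>w. w + b z) q)) (at q)"
    proof (rule log_deriv[OF open_slice1[OF S_open]])
      show "q \<in> {w. (w, z) \<in> S}" using that by simp
      show "continuous_on {w. (w, z) \<in> S} (\<lambda>w. L (w, z))"
        by (rule continuous_on_compose2[OF L_cont]) (auto intro!: continuous_intros)
      show "exp (L (w, z)) = w + b z" if "w \<in> {w. (w, z) \<in> S}" for w using that L_log by auto
      show "((\<lambda>w. w + b z) has_field_derivative 1) (at q)" by (auto intro!: derivative_eq_intros)
    qed
    then show ?thesis by simp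
  qed
  have Lz: "((\<lambda>w. L (q, w)) has_field_derivative deriv b z / (q + b z)) (at z)" if "(q, z) \<in> S" for q z
  proof -
    have "((\<lambda>w. L (q, w)) has_field_derivative deriv b z / ((\<lambda>w. q + b w) z)) (at z)"
    proof (rule log_deriv[OF open_slice2[OF S_open]])
      show "z \<in> {w. (q, w) \<in> S}" using that by simp
      show "continuous_on {w. (q, w) \<in> S} (\<lambda>w. L (q, w))"
        by (rule continuous_on_compose2[OF L_cont]) (auto intro!: continuous_intros)
      show "exp (L (q, w)) = q + b w" if "w \<in> {w. (q, w) \<in> S}" for w using that L_log by auto
      show "((\<lambda>w. q + b w) has_field_derivative deriv b z) (at z)"
        using bd1[OF zSz[OF that]] by (auto intro!: derivative_eq_intros)
    qed
    then show ?thesis by simp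
  qed
  have Gcd: "\<exists>G'. (G has_derivative G') (at z) \<and> (Gc has_derivative (\<lambda>h. of_real (G' h))) (at z)" if "z \<in> Sz" for z
  proof -
    have "G differentiable (at z)" using G_diff that unfolding Sz_def by blast
    then obtain G' where G': "(G has_derivative G') (at z)" by (auto simp: differentiable_def)
    have "(Gc has_derivative (\<lambda>h. of_real (G' h))) (at z)"
      unfolding Gc_def[abs_def] by (rule bounded_linear.has_derivative[OF bounded_linear_of_real G'])
    then show ?thesis using G' by blast
  qed
  have Gc_diff: "Gc differentiable (at z)" if "z \<in> Sz" for z
    using Gcd[OF that] by (auto simp: differentiable_def)
  have ddGc: "dd Gc v z = of_real (dd G v z)" if "z \<in> Sz" for v z
    using Gcd[OF that] dd_hasderiv by metis
  have wzGc: "wz Gc z = (of_real (dd G 1 z) - \<i> * of_real (dd G \<i> z)) / 2" if "z \<in> Sz" for z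
    unfolding wz_def using ddGc[OF that] by simp
  have wzGc_diff: "(wz Gc) differentiable (at z)" if "z \<in> Sz" for z
  proof -
    have dv: "((\<lambda>w. complex_of_real (dd G v w)) has_derivative (\<lambda>h. of_real (D h))) (at z)"
      if "((dd G v) has_derivative D) (at z)" for v D
      by (rule bounded_linear.has_derivative[OF bounded_linear_of_real that])
    have "(dd G 1) differentiable (at z)" "(dd G \<i>) differentiable (at z)" using G_diff2 \<open>z \<in> Sz\<close> unfolding Sz_def by blast+
    then obtain D1 D2 where D1: "((dd G 1) has_derivative D1) (at z)" and D2: "((dd G \<i>) has_derivative D2) (at z)"
      by (auto simp: differentiable_def)
    have "((\<lambda>w. (of_real (dd G 1 w) - \<i> * of_real (dd G \<i> w)) / 2) has_derivative
           (\<lambda>h. (of_real (D1 h) - \<i> * of_real (D2 h)) / 2)) (at z)"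
      by (intro bounded_linear.has_derivative[OF bounded_linear_divide] has_derivative_diff
          has_derivative_mult_right dv D1 D2)
    then have "(wz Gc has_derivative (\<lambda>h. (of_real (D1 h) - \<i> * of_real (D2 h)) / 2)) (at z)"
      by (rule has_derivative_transform_within_open[OF _ Sz that]) (simp add: wzGc)
    then show ?thesis by (auto simp: differentiable_def)
  qed
  have wdLn: "wd1 (\<lambda>w. Ln (w + cnj w)) (inverse (z + cnj z) * (1 + 0)) (inverse (z + cnj z) * (0 + 1)) z"
    if "(q, z) \<in> S" for q z
    using wd1_comp[OF has_field_derivative_Ln[OF s_notin[OF zpos[OF that]]] wd1_add[OF wd1_id wd1_cnjid]] by simp
  have cu: "(cnj q + cnj (b z)) * cnj (1 / (q + b z)) = 1" if "(q, z) \<in> S" for q z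
  proof -
    have "(cnj q + cnj (b z)) * cnj (1 / (q + b z)) = cnj ((q + b z) * (1 / (q + b z)))"
      by (simp only: complex_cnj_mult complex_cnj_add)
    also have "\<dots> = 1" using u0[OF that] by simp
    finally show ?thesis .
  qed
  have A: "Wq \<psi> (q, z) = L (q, z) - Ln (z + cnj z) - \<i>/2 * g (Im q) z \<and>
           Wqb \<psi> (q, z) = cnj (L (q, z)) - Ln (z + cnj z) + \<i>/2 * g (Im q) z" if "(q, z) \<in> S" for q z
  proof -
    note tL = wd1_field[OF Lq[OF that]]
    note t1 = wd1_mult[OF wd1_add[OF wd1_id wd1_const[of "b z"]] tL]
    note t2 = wd1_mult[OF wd1_add[OF wd1_cnjid wd1_const[of "cnj (b z)"]] wd1_cnj[OF tL]]
    note t3 = wd1_mult[OF wd1_add[OF wd1_id wd1_cnjid] wd1_const[of "Ln (z + cnj z) + 1"]]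
    note t4 = wd1_const[of "complex_of_real (G z)"]
    note t5 = wd1_Im[OF H1[OF that]]
    note all = wd1_add[OF wd1_add[OF wd1_sub[OF wd1_add[OF t1 t2] t3] t4] t5]
    have "wd1 (\<lambda>w. \<psi> (w, z)) (L (q, z) - Ln (z + cnj z) - \<i>/2 * g (Im q) z)
            (cnj (L (q, z)) - Ln (z + cnj z) + \<i>/2 * g (Im q) z) q"
    proof (rule wd1_cong[OF all])
      show "(w + b z) * L (w, z) + (cnj w + cnj (b z)) * cnj (L (w, z)) - (w + cnj w) * (Ln (z + cnj z) + 1)
             + complex_of_real (G z) + \<Phi> (Im w) z = \<psi> (w, z)" for w
        by (simp add: \<psi>_def psi0_def)
      show "(q + b z) * (1 / (q + b z)) + (1 + 0) * L (q, z) + ((cnj q + cnj (b z)) * cnj 0 + (0 + 0) * cnj (L (q, z))) -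
          ((q + cnj q) * 0 + (1 + 0) * (Ln (z + cnj z) + 1)) + 0 + - (\<i> / 2) * g (Im q) z =
          L (q, z) - Ln (z + cnj z) - \<i> / 2 * g (Im q) z"
        using u0[OF that] by simp
      show "(q + b z) * 0 + (0 + 0) * L (q, z) + ((cnj q + cnj (b z)) * cnj (1 / (q + b z)) + (1 + 0) * cnj (L (q, z))) -
          ((q + cnj q) * 0 + (0 + 1) * (Ln (z + cnj z) + 1)) + 0 + \<i> / 2 * g (Im q) z =
          cnj (L (q, z)) - Ln (z + cnj z) + \<i> / 2 * g (Im q) z"
        using cu[OF that] by simp
    qed
    then show ?thesis using wd1_wz by (simp add: Wq_wz Wqb_wzb)
  qed
  have B: "Wz \<psi> (q, z) = deriv b z * L (q, z) + deriv b z - (q + cnj q) * inverse (z + cnj z) + wz Gc z + C (Im q) z"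
    if "(q, z) \<in> S" for q z
  proof -
    note tb = wd1_field[OF bd1[OF zSz[OF that]]]
    note tL = wd1_field[OF Lz[OF that]]
    note t1 = wd1_mult[OF wd1_add[OF wd1_const[of q] tb] tL]
    note t2 = wd1_mult[OF wd1_add[OF wd1_const[of "cnj q"] wd1_cnj[OF tb]] wd1_cnj[OF tL]]
    note t3 = wd1_mult[OF wd1_const[of "q + cnj q"] wd1_add[OF wdLn[OF that] wd1_const[of 1]]]
    note t4 = wd1_diffble[OF Gc_diff[OF zSz[OF that]]]
    note t5 = H3[OF that]
    note all = wd1_add[OF wd1_add[OF wd1_sub[OF wd1_add[OF t1 t2] t3] t4] t5]
    have "\<exists>c. wd1 (\<lambda>w. \<psi> (q, w)) (deriv b z * L (q, z) + deriv b z - (q + cnj q) * inverse (z + cnj z) + wz Gc z + C (Im q) z) c z"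
      apply (rule exI)
      apply (rule wd1_cong[OF all])
        apply (simp add: \<psi>_def psi0_def Gc_def)
       apply (use u0[OF that] in simp)
      apply (rule refl)
      done
    then show ?thesis using wd1_wz by (auto simp: Wz_wz)
  qed
  show ?thesis unfolding solves_def \<psi>_def[symmetric]
  proof
    fix p assume pS: "p \<in> S"
    obtain q z where pz: "p = (q, z)" by (cases p)
    have qz: "(q, z) \<in> S" using pS pz by simp
    have T1: "open {w. (w, z) \<in> S}" "q \<in> {w. (w, z) \<in> S}" using open_slice1[OF S_open] qz by auto
    have T2: "open {w. (q, w) \<in> S}" "z \<in> {w. (q, w) \<in> S}" using open_slice2[OF S_open] qz by auto
    note tLq = wd1_field[OF Lq[OF qz]]
    note tLz = wd1_field[OF Lz[OF qz]]
    note tg = wd1_Im[OF H2[OF qz]]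
    have e1: "wd1 (\<lambda>w. Wq \<psi> (w, z)) (1 / (q + b z) - gyy (Im q) z / 4) (gyy (Im q) z / 4) q"
    proof (rule wd1_transform[OF _ T1])
      show "wd1 (\<lambda>w. L (w, z) - Ln (z + cnj z) - \<i>/2 * g (Im w) z) (1 / (q + b z) - gyy (Im q) z / 4) (gyy (Im q) z / 4) q"
        by (rule wd1_cong[OF wd1_sub[OF wd1_sub[OF tLq wd1_const[of "Ln (z + cnj z)"]] wd1_mult[OF wd1_const[of "\<i>/2"] tg]]]) simp_all
      show "L (w, z) - Ln (z + cnj z) - \<i>/2 * g (Im w) z = Wq \<psi> (w, z)" if "w \<in> {w. (w, z) \<in> S}" for w
        using A[of w z] that by simp
    qed
    have e2: "wd1 (\<lambda>w. Wqb \<psi> (w, z)) (gyy (Im q) z / 4) (cnj (1 / (q + b z)) - gyy (Im q) z / 4) q"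
    proof (rule wd1_transform[OF _ T1])
      show "wd1 (\<lambda>w. cnj (L (w, z)) - Ln (z + cnj z) + \<i>/2 * g (Im w) z) (gyy (Im q) z / 4) (cnj (1 / (q + b z)) - gyy (Im q) z / 4) q"
        by (rule wd1_cong[OF wd1_add[OF wd1_sub[OF wd1_cnj[OF tLq] wd1_const[of "Ln (z + cnj z)"]] wd1_mult[OF wd1_const[of "\<i>/2"] tg]]]) simp_all
      show "cnj (L (w, z)) - Ln (z + cnj z) + \<i>/2 * g (Im w) z = Wqb \<psi> (w, z)" if "w \<in> {w. (w, z) \<in> S}" for w
        using A[of w z] that by simp
    qed
    have e3: "wd1 (\<lambda>w. Wq \<psi> (q, w)) (deriv b z / (q + b z) - inverse (z + cnj z) - \<i>/2 * gz (Im q) z)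
                 (- inverse (z + cnj z) - \<i>/2 * gzb (Im q) z) z"
    proof (rule wd1_transform[OF _ T2])
      show "wd1 (\<lambda>w. L (q, w) - Ln (w + cnj w) - \<i>/2 * g (Im q) w) (deriv b z / (q + b z) - inverse (z + cnj z) - \<i>/2 * gz (Im q) z)
                 (- inverse (z + cnj z) - \<i>/2 * gzb (Im q) z) z"
        by (rule wd1_cong[OF wd1_sub[OF wd1_sub[OF tLz wdLn[OF qz]] wd1_mult[OF wd1_const[of "\<i>/2"] H5[OF qz]]]]) simp_all
      show "L (q, w) - Ln (w + cnj w) - \<i>/2 * g (Im q) w = Wq \<psi> (q, w)" if "w \<in> {w. (q, w) \<in> S}" for w
        using A[of q w] that by simp
    qed
    have e4: "wd1 (\<lambda>w. Wqb \<psi> (q, w)) (- inverse (z + cnj z) + \<i>/2 * gz (Im q) z)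
                 (cnj (deriv b z / (q + b z)) - inverse (z + cnj z) + \<i>/2 * gzb (Im q) z) z"
    proof (rule wd1_transform[OF _ T2])
      show "wd1 (\<lambda>w. cnj (L (q, w)) - Ln (w + cnj w) + \<i>/2 * g (Im q) w) (- inverse (z + cnj z) + \<i>/2 * gz (Im q) z)
                 (cnj (deriv b z / (q + b z)) - inverse (z + cnj z) + \<i>/2 * gzb (Im q) z) z"
        by (rule wd1_cong[OF wd1_add[OF wd1_sub[OF wd1_cnj[OF tLz] wdLn[OF qz]] wd1_mult[OF wd1_const[of "\<i>/2"] H5[OF qz]]]]) simp_all
      show "cnj (L (q, w)) - Ln (w + cnj w) + \<i>/2 * g (Im q) w = Wqb \<psi> (q, w)" if "w \<in> {w. (q, w) \<in> S}" for w
        using A[of q w] that by simp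
    qed
    have e5a: "\<exists>a. wd1 (\<lambda>w. deriv b w * L (q, w) + deriv b w - (q + cnj q) * inverse (w + cnj w) + wz Gc w + C (Im q) w) a
               ((q + cnj q) * inverse (z + cnj z) ^ 2 + (b z + cnj (b z)) / (z + cnj z)\<^sup>2) z"
    proof -
      have Geq: "wzb (wz Gc) z = (b z + cnj (b z)) / (z + cnj z)\<^sup>2"
        using G_eq zSz[OF qz] unfolding Gc_def[abs_def] Sz_def by blast
      note tb2 = wd1_field[OF bd2[OF zSz[OF qz]]]
      note tinv = wd1_comp[OF DERIV_inverse[OF s0[OF qz], where s=UNIV] wd1_add[OF wd1_id wd1_cnjid]]
      note tG2 = wd1_diffble[OF wzGc_diff[OF zSz[OF qz]]]
      note all = wd1_add[OF wd1_add[OF wd1_sub[OF wd1_add[OF wd1_mult[OF tb2 tLz] tb2] wd1_mult[OF wd1_const[of "q + cnj q"] tinv]] tG2] H4[OF qz]]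
      show ?thesis
        apply (rule exI)
        apply (rule wd1_cong[OF all])
          apply simp
         apply (rule refl)
        using Geq by (simp add: power2_eq_square)
    qed
    then obtain a5 where e5': "wd1 (\<lambda>w. deriv b w * L (q, w) + deriv b w - (q + cnj q) * inverse (w + cnj w) + wz Gc w + C (Im q) w) a5
               ((q + cnj q) * inverse (z + cnj z) ^ 2 + (b z + cnj (b z)) / (z + cnj z)\<^sup>2) z" by blast
    have e5: "wd1 (\<lambda>w. Wz \<psi> (q, w)) a5 ((q + cnj q) * inverse (z + cnj z) ^ 2 + (b z + cnj (b z)) / (z + cnj z)\<^sup>2) z"
    proof (rule wd1_transform[OF e5' T2])
      show "deriv b w * L (q, w) + deriv b w - (q + cnj q) * inverse (w + cnj w) + wz Gc w + C (Im q) w = Wz \<psi> (q, w)"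
        if "w \<in> {w. (q, w) \<in> S}" for w
        using B[of q w] that by simp
    qed
    have QQ: "Wq (Wq \<psi>) (q, z) = 1 / (q + b z) - gyy (Im q) z / 4"
      using wd1_wz(1)[OF e1] by (simp add: Wq_wz)
    have QbQ: "Wqb (Wq \<psi>) (q, z) = gyy (Im q) z / 4"
      using wd1_wz(2)[OF e1] by (simp add: Wqb_wzb)
    have QbQb: "Wqb (Wqb \<psi>) (q, z) = cnj (1 / (q + b z)) - gyy (Im q) z / 4"
      using wd1_wz(2)[OF e2] by (simp add: Wqb_wzb)
    have ZbQ: "Wzb (Wq \<psi>) (q, z) = - inverse (z + cnj z) - \<i>/2 * gzb (Im q) z"
      using wd1_wz(2)[OF e3] by (simp add: Wzb_wzb)
    have ZQb: "Wz (Wqb \<psi>) (q, z) = - inverse (z + cnj z) + \<i>/2 * gz (Im q) z"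
      using wd1_wz(1)[OF e4] by (simp add: Wz_wz)
    have ZbZ: "Wzb (Wz \<psi>) (q, z) = (q + cnj q) * inverse (z + cnj z) ^ 2 + (b z + cnj (b z)) / (z + cnj z)\<^sup>2"
      using wd1_wz(2)[OF e5] by (simp add: Wzb_wzb)
    have EX: "exp (Wq \<psi> (q, z) + Wqb \<psi> (q, z)) = (q + b z) * cnj (q + b z) / (z + cnj z)\<^sup>2"
    proof -
      have "Wq \<psi> (q, z) + Wqb \<psi> (q, z) = L (q, z) + cnj (L (q, z)) - (Ln (z + cnj z) + Ln (z + cnj z))"
        using A[OF qz] by simp
      then have "exp (Wq \<psi> (q, z) + Wqb \<psi> (q, z)) = exp (L (q, z)) * exp (cnj (L (q, z))) / (exp (Ln (z + cnj z)) * exp (Ln (z + cnj z)))"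
        by (simp add: exp_add exp_diff exp_double power2_eq_square)
      also have "\<dots> = (q + b z) * cnj (q + b z) / (z + cnj z)\<^sup>2"
        using L_log qz s0[OF qz] by (simp add: exp_cnj[symmetric] power2_eq_square)
      finally show ?thesis .
    qed
    have cu': "cnj (1 / (q + b z)) = 1 / cnj (q + b z)" by simp
    show "Wqb (Wq \<psi>) p * Wzb (Wz \<psi>) p - Wzb (Wq \<psi>) p * Wz (Wqb \<psi>) p =
          exp (Wq \<psi> p + Wqb \<psi> p) * ((Wqb (Wq \<psi>) p)\<^sup>2 - Wq (Wq \<psi>) p * Wqb (Wqb \<psi>) p)"
      unfolding pz QQ QbQ QbQb ZbQ ZQb ZbZ EX H6[OF qz] cu'
    proof (rule final_alg)
      show "q + b z \<noteq> 0" "z + cnj z \<noteq> 0" using u0[OF qz] s0[OF qz] by auto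
      show "cnj (q + b z) \<noteq> 0" using u0[OF qz] complex_cnj_zero_iff by blast
      show "q + cnj q + (b z + cnj (b z)) = q + b z + cnj (q + b z)" by simp
    qed
  qed
qed


lemma smooth_d:
  assumes "smooth_real r"
  shows "(r has_real_derivative deriv r x) (at x)" "(deriv r has_real_derivative deriv (deriv r) x) (at x)"
proof -
  have "((deriv ^^ 0) r) differentiable (at x)" "((deriv ^^ 1) r) differentiable (at x)"
    using assms unfolding smooth_real_def by blast+
  then show "(r has_real_derivative deriv r x) (at x)" "(deriv r has_real_derivative deriv (deriv r) x) (at x)"
    by (simp_all add: DERIV_deriv_iff_real_differentiable)
qed

lemma cnjdiv_notin: "Re w > 0 \<Longrightarrow> cnj w / w \<notin> \<real>\<^sub>\<le>\<^sub>0"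
proof (cases "Im w = 0")
  case True
  assume "Re w > 0"
  then have "w \<noteq> 0" by auto
  have "cnj w = w" using True by (simp add: complex_eq_iff)
  then show ?thesis using \<open>w \<noteq> 0\<close> by (simp add: complex_nonpos_Reals_iff)
next
  case False
  assume p: "Re w > 0"
  have "Im (cnj w / w) = - 2 * Re w * Im w / ((Re w)^2 + (Im w)^2)"
    by (simp add: Im_divide power2_eq_square)
  moreover have "(Re w)^2 + (Im w)^2 > 0" using p by (simp add: add_pos_nonneg)
  ultimately have "Im (cnj w / w) \<noteq> 0" using p False by simp
  then show ?thesis by (simp add: complex_nonpos_Reals_iff)
qed

lemma H6_alg:
  fixes w s :: complex
  assumes "w \<noteq> 0" "s = w + cnj w" "s \<noteq> 0"
  shows "(- inverse s + 1 / cnj w) * (- inverse s + 1 / w) = inverse s ^ 2"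
proof -
  have cw: "cnj w \<noteq> 0" using assms(1) by simp
  have "- inverse s + 1 / cnj w = w / (s * cnj w)" using assms cw by (simp add: field_simps)
  moreover have "- inverse s + 1 / w = cnj w / (s * w)" using assms cw by (simp add: field_simps)
  moreover have "(w / (s * cnj w)) * (cnj w / (s * w)) = inverse s ^ 2"
    using assms(1,3) cw by (simp add: field_simps power2_eq_square)
  ultimately show ?thesis by simp
qed

lemma psi1_eq: "psi1 b L G r = (\<lambda>p. psi0 b L G p + (\<lambda>y z. complex_of_real (r y)) (Im (fst p)) (snd p))"
  by (rule ext) (simp add: psi1_def psi0_def Let_def)

lemma psi2_eq: "psi2 b L G r = (\<lambda>p. psi0 b L G p +
    (\<lambda>y z. complex_of_real (r y) + 2 * \<i> * complex_of_real y * Ln (cnj z / z)) (Im (fst p)) (snd p))"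
  by (rule ext) (simp add: psi2_def psi1_def psi0_def Let_def algebra_simps)

lemma psi3_eq: "psi3 b L G r k y0 = (\<lambda>p. psi0 b L G p +
    (\<lambda>y z. complex_of_real (r y) + 2 * \<i> * Kfun k y0 y z) (Im (fst p)) (snd p))"
  by (rule ext) (simp add: psi3_def psi1_def psi0_def Let_def algebra_simps)

lemma case1:
  fixes S :: "(complex \<times> complex) set" and b :: "complex \<Rightarrow> complex" and L :: "complex \<times> complex \<Rightarrow> complex"
    and G :: "complex \<Rightarrow> real" and r :: "real \<Rightarrow> real"
  assumes S_open: "open S"
    and S_pos: "\<forall>p\<in>S. Re (snd p) > 0"
    and b_hol: "b holomorphic_on (snd ` S)"
    and L_cont: "continuous_on S L"
    and L_log: "\<forall>p\<in>S. exp (L p) = fst p + b (snd p)"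
    and r_smooth: "smooth_real r"
    and G_diff: "\<forall>z\<in>snd ` S. G differentiable (at z)"
    and G_diff2: "\<forall>v. \<forall>z\<in>snd ` S. (dd G v) differentiable (at z)"
    and G_eq: "\<forall>z\<in>snd ` S. wzb (wz (\<lambda>w. complex_of_real (G w))) z
                 = (b z + cnj (b z)) / (z + cnj z)\<^sup>2"
  shows "solves S (psi1 b L G r)"
  unfolding psi1_eq
proof (rule core[where g="\<lambda>y z. of_real (deriv r y)" and gyy="\<lambda>y z. of_real (deriv (deriv r) y)"
      and C="\<lambda>y z. 0" and D="\<lambda>y z. 0" and Cz="\<lambda>y z. 0" and gz="\<lambda>y z. 0" and gzb="\<lambda>y z. 0",
      OF S_open S_pos b_hol L_cont L_log G_diff G_diff2 G_eq])
  fix q z assume qz: "(q, z) \<in> S"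
  show "((\<lambda>y. complex_of_real (r y)) has_vector_derivative of_real (deriv r (Im q))) (at (Im q))"
    by (rule has_vector_derivative_of_real[OF smooth_d(1)[OF r_smooth]])
  show "((\<lambda>y. complex_of_real (deriv r y)) has_vector_derivative of_real (deriv (deriv r) (Im q))) (at (Im q))"
    by (rule has_vector_derivative_of_real[OF smooth_d(2)[OF r_smooth]])
  show "wd1 (\<lambda>w. complex_of_real (r (Im q))) 0 0 z" by (rule wd1_const)
  show "wd1 (\<lambda>w. 0) 0 0 z" by (rule wd1_const)
  show "wd1 (\<lambda>w. complex_of_real (deriv r (Im q))) 0 0 z" by (rule wd1_const)
  show "(- inverse (z + cnj z) - \<i> / 2 * 0) * (- inverse (z + cnj z) + \<i> / 2 * 0) = inverse (z + cnj z) ^ 2"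
    by (simp add: power2_eq_square)
qed

lemma wd1_Lnq:
  assumes "Re z > 0"
  shows "wd1 (\<lambda>w. Ln (cnj w / w)) (- 1 / z) (1 / cnj z) z"
proof -
  have z0: "z \<noteq> 0" using assms by auto
  note tq = wd1_mult[OF wd1_cnjid wd1_field[OF DERIV_inverse[OF z0, where s=UNIV]]]
  note tl = wd1_comp[OF has_field_derivative_Ln[OF cnjdiv_notin[OF assms, unfolded divide_inverse]] tq]
  show ?thesis
  proof (rule wd1_cong[OF tl])
    show "Ln (cnj w * inverse w) = Ln (cnj w / w)" for w by (simp add: divide_inverse)
    show "inverse (cnj z * inverse z) * (cnj z * - (inverse z ^ Suc (Suc 0)) + 0 * inverse z) = - 1 / z"
      using z0 by (simp add: field_simps power2_eq_square)
    show "inverse (cnj z * inverse z) * (cnj z * 0 + 1 * inverse z) = 1 / cnj z"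
      using z0 by (simp add: field_simps)
  qed
qed

lemma case2:
  fixes S :: "(complex \<times> complex) set" and b :: "complex \<Rightarrow> complex" and L :: "complex \<times> complex \<Rightarrow> complex"
    and G :: "complex \<Rightarrow> real" and r :: "real \<Rightarrow> real"
  assumes S_open: "open S"
    and S_pos: "\<forall>p\<in>S. Re (snd p) > 0"
    and b_hol: "b holomorphic_on (snd ` S)"
    and L_cont: "continuous_on S L"
    and L_log: "\<forall>p\<in>S. exp (L p) = fst p + b (snd p)"
    and r_smooth: "smooth_real r"
    and G_diff: "\<forall>z\<in>snd ` S. G differentiable (at z)"
    and G_diff2: "\<forall>v. \<forall>z\<in>snd ` S. (dd G v) differentiable (at z)"
    and G_eq: "\<forall>z\<in>snd ` S. wzb (wz (\<lambda>w. complex_of_real (G w))) z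
                 = (b z + cnj (b z)) / (z + cnj z)\<^sup>2"
  shows "solves S (psi2 b L G r)"
  unfolding psi2_eq
proof (rule core[where g="\<lambda>y z. of_real (deriv r y) + 2 * \<i> * Ln (cnj z / z)"
      and gyy="\<lambda>y z. of_real (deriv (deriv r) y)"
      and C="\<lambda>y z. - 2 * \<i> * of_real y / z" and D="\<lambda>y z. 2 * \<i> * of_real y / cnj z"
      and Cz="\<lambda>y z. 2 * \<i> * of_real y / z^2" and gz="\<lambda>y z. - 2 * \<i> / z" and gzb="\<lambda>y z. 2 * \<i> / cnj z",
      OF S_open S_pos b_hol L_cont L_log G_diff G_diff2 G_eq])
  fix q z assume qz: "(q, z) \<in> S"
  have zp: "Re z > 0" using S_pos qz by force
  have z0: "z \<noteq> 0" using zp by auto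
  have d1: "((\<lambda>y. 2 * \<i> * complex_of_real y * Ln (cnj z / z)) has_vector_derivative 2 * \<i> * Ln (cnj z / z)) (at (Im q))"
  proof -
    have "((\<lambda>x. 2 * \<i> * x * Ln (cnj z / z)) has_field_derivative 2 * \<i> * Ln (cnj z / z)) (at (of_real (Im q)))"
      by (auto intro!: derivative_eq_intros)
    from has_vector_derivative_real_field[OF this] show ?thesis by simp
  qed
  show "((\<lambda>y. complex_of_real (r y) + 2 * \<i> * complex_of_real y * Ln (cnj z / z)) has_vector_derivative
        of_real (deriv r (Im q)) + 2 * \<i> * Ln (cnj z / z)) (at (Im q))"
    by (rule has_vector_derivative_add[OF has_vector_derivative_of_real[OF smooth_d(1)[OF r_smooth]] d1])
  show "((\<lambda>y. complex_of_real (deriv r y) + 2 * \<i> * Ln (cnj z / z)) has_vector_derivative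
        of_real (deriv (deriv r) (Im q))) (at (Im q))"
    using has_vector_derivative_add[OF has_vector_derivative_of_real[OF smooth_d(2)[OF r_smooth]]
        has_vector_derivative_const[of "2 * \<i> * Ln (cnj z / z)"]] by simp
  note tl = wd1_Lnq[OF zp]
  show "wd1 (\<lambda>w. complex_of_real (r (Im q)) + 2 * \<i> * complex_of_real (Im q) * Ln (cnj w / w))
          (- 2 * \<i> * complex_of_real (Im q) / z) (2 * \<i> * complex_of_real (Im q) / cnj z) z"
    by (rule wd1_cong[OF wd1_add[OF wd1_const[of "complex_of_real (r (Im q))"]
          wd1_mult[OF wd1_const[of "2 * \<i> * complex_of_real (Im q)"] tl]]]) (simp_all add: field_simps)
  show "wd1 (\<lambda>w. - 2 * \<i> * complex_of_real (Im q) / w) (2 * \<i> * complex_of_real (Im q) / z^2) 0 z"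
    by (rule wd1_field) (use z0 in \<open>auto intro!: derivative_eq_intros simp: power2_eq_square\<close>)
  show "wd1 (\<lambda>w. complex_of_real (deriv r (Im q)) + 2 * \<i> * Ln (cnj w / w)) (- 2 * \<i> / z) (2 * \<i> / cnj z) z"
    by (rule wd1_cong[OF wd1_add[OF wd1_const[of "complex_of_real (deriv r (Im q))"]
          wd1_mult[OF wd1_const[of "2 * \<i>"] tl]]]) (simp_all add: field_simps)
  have s0: "z + cnj z \<noteq> 0" using zp by (simp add: complex_eq_iff)
  show "(- inverse (z + cnj z) - \<i> / 2 * (2 * \<i> / cnj z)) * (- inverse (z + cnj z) + \<i> / 2 * (- 2 * \<i> / z)) =
        inverse (z + cnj z) ^ 2"
    using H6_alg[OF z0 refl s0] by simp
qed

lemma int_cont: "continuous_on UNIV (F :: real \<Rightarrow> complex) \<Longrightarrow> F integrable_on {a..b}"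
  by (rule Henstock_Kurzweil_Integration.integrable_continuous_interval) (rule continuous_on_subset, auto)

lemma oint_split:
  fixes F :: "real \<Rightarrow> complex"
  assumes "continuous_on UNIV F" "m \<le> a" "m \<le> x"
  shows "oint F a x = integral {m..x} F - integral {m..a} F"
proof (cases "a \<le> x")
  case True
  have "integral {m..a} F + integral {a..x} F = integral {m..x} F"
    by (rule Henstock_Kurzweil_Integration.integral_combine) (use True assms int_cont in auto)
  then show ?thesis using True by (simp add: oint_def algebra_simps)
next
  case False
  have "integral {m..x} F + integral {x..a} F = integral {m..a} F"
    by (rule Henstock_Kurzweil_Integration.integral_combine) (use False assms int_cont in auto)
  then show ?thesis using False by (simp add: oint_def algebra_simps)
qed

lemma oint_deriv:
  fixes F :: "real \<Rightarrow> complex"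
  assumes "continuous_on UNIV F"
  shows "((\<lambda>y. oint F a y) has_vector_derivative F x) (at x)"
proof -
  define m where "m = min a x - 1"
  define M where "M = max a x + 1"
  have "((\<lambda>u. integral {m..u} F) has_vector_derivative F x) (at x within {m..M})"
    by (rule integral_has_vector_derivative) (use continuous_on_subset[OF assms] in \<open>auto simp: m_def M_def\<close>)
  moreover have "at x within {m..M} = at x"
    by (rule at_within_interior) (auto simp: m_def M_def)
  ultimately have d: "((\<lambda>u. integral {m..u} F) has_vector_derivative F x) (at x)" by simp
  have "((\<lambda>u. integral {m..u} F - integral {m..a} F) has_vector_derivative F x - 0) (at x)"
    by (rule has_vector_derivative_diff[OF d has_vector_derivative_const])
  then have "((\<lambda>u. integral {m..u} F - integral {m..a} F) has_vector_derivative F x) (at x)" by simp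
  then show ?thesis
  proof (rule has_vector_derivative_transform_within_open[where S="{m<..}"])
    show "x \<in> {m<..}" by (simp add: m_def)
    show "integral {m..y} F - integral {m..a} F = oint F a y" if "y \<in> {m<..}" for y
      using oint_split[OF assms, of m a y] that by (simp add: m_def)
  qed simp
qed

lemma oint_cnj_diff:
  fixes F :: "real \<Rightarrow> complex"
  assumes "continuous_on UNIV F"
  shows "oint (\<lambda>t. cnj (F t) - F t) a y = cnj (oint F a y) - oint F a y"
proof -
  have c: "continuous_on UNIV (\<lambda>t. cnj (F t))" using assms by (intro continuous_intros)
  have e: "integral {u..v} (\<lambda>t. cnj (F t) - F t) = cnj (integral {u..v} F) - integral {u..v} F" for u v
    using int_cont[OF c, of u v] int_cont[OF assms, of u v] by (simp add: integral_diff integral_cnj)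
  show ?thesis unfolding oint_def e by simp
qed

lemma oint_leibniz:
  fixes f fx :: "complex \<Rightarrow> real \<Rightarrow> complex"
  assumes U: "open U" "convex U" "w0 \<in> U"
    and d: "\<And>w t. w \<in> U \<Longrightarrow> ((\<lambda>w. f w t) has_field_derivative fx w t) (at w)"
    and cf: "\<And>w. w \<in> U \<Longrightarrow> continuous_on UNIV (f w)"
    and cfx: "continuous_on (U \<times> UNIV) (\<lambda>(w, t). fx w t)"
  shows "((\<lambda>w. oint (f w) a c) has_field_derivative oint (fx w0) a c) (at w0)"
proof -
  have L: "((\<lambda>w. integral {x..y} (f w)) has_field_derivative integral {x..y} (fx w0)) (at w0)" for x y
  proof -
    have "((\<lambda>w. integral (cbox x y) (f w)) has_field_derivative integral (cbox x y) (fx w0)) (at w0 within U)"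
    proof (rule leibniz_rule_field_derivative[OF _ _ _ U(3) U(2)])
      show "((\<lambda>w. f w t) has_field_derivative fx w t) (at w within U)" if "w \<in> U" for w t
        using d[OF that] by (rule has_field_derivative_at_within)
      show "f w integrable_on cbox x y" if "w \<in> U" for w
        using int_cont[OF cf[OF that]] by simp
      show "continuous_on (U \<times> cbox x y) (\<lambda>(w, t). fx w t)"
        by (rule continuous_on_subset[OF cfx]) auto
    qed
    then show ?thesis using at_within_open[OF U(3) U(1)] by simp
  qed
  show ?thesis
  proof (cases "a \<le> c")
    case True then show ?thesis unfolding oint_def using L[of a c] by simp
  next
    case False then show ?thesis unfolding oint_def using DERIV_minus[OF L[of c a]] by simp
  qed
qed

lemma LnQ:
  assumes "Re w > 0"
  shows "Ln (cnj w / w) = cnj (Ln w) - Ln w"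
proof (rule Ln_unique)
  have w0: "w \<noteq> 0" using assms by auto
  show "exp (cnj (Ln w) - Ln w) = cnj w / w" using w0 by (simp add: exp_diff exp_cnj[symmetric])
  have "\<bar>Im (Ln w)\<bar> < pi/2" using Re_Ln_pos_lt[OF w0] assms by simp
  then show "- pi < Im (cnj (Ln w) - Ln w)" "Im (cnj (Ln w) - Ln w) \<le> pi" by auto
qed

lemma kq: "(cnj z + 2 * \<i> * complex_of_real x) / (z - 2 * \<i> * complex_of_real x)
      = cnj (z - 2 * \<i> * complex_of_real x) / (z - 2 * \<i> * complex_of_real x)"
  by simp

lemma case3:
  fixes S :: "(complex \<times> complex) set" and b :: "complex \<Rightarrow> complex" and L :: "complex \<times> complex \<Rightarrow> complex"
    and G :: "complex \<Rightarrow> real" and r k :: "real \<Rightarrow> real" and y0 :: real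
  assumes S_open: "open S"
    and S_pos: "\<forall>p\<in>S. Re (snd p) > 0"
    and b_hol: "b holomorphic_on (snd ` S)"
    and L_cont: "continuous_on S L"
    and L_log: "\<forall>p\<in>S. exp (L p) = fst p + b (snd p)"
    and r_smooth: "smooth_real r"
    and k_smooth: "smooth_real k"
    and G_diff: "\<forall>z\<in>snd ` S. G differentiable (at z)"
    and G_diff2: "\<forall>v. \<forall>z\<in>snd ` S. (dd G v) differentiable (at z)"
    and G_eq: "\<forall>z\<in>snd ` S. wzb (wz (\<lambda>w. complex_of_real (G w))) z
                 = (b z + cnj (b z)) / (z + cnj z)\<^sup>2"
  shows "solves S (psi3 b L G r k y0)"
proof -
  define H where "H = {w::complex. Re w > 0}"
  have Hopen: "open H" and Hconv: "convex H"
    by (simp_all add: H_def open_halfspace_Re_gt convex_halfspace_Re_gt)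
  define c where "c t = 2 * \<i> * complex_of_real (k t)" for t
  have kc: "continuous_on UNIV k"
    using smooth_d(1)[OF k_smooth] by (intro continuous_at_imp_continuous_on ballI DERIV_isCont) auto
  have cc: "continuous_on UNIV c" unfolding c_def[abs_def] by (intro continuous_intros kc)
  have Re_wc: "Re (w - c t) = Re w" for w t by (simp add: c_def)
  have nz: "w - c t \<noteq> 0" if "w \<in> H" for w t
  proof
    assume "w - c t = 0" then have "Re (w - c t) = 0" by simp
    then show False using that Re_wc[of w t] by (simp add: H_def)
  qed
  have notin: "w - c t \<notin> \<real>\<^sub>\<le>\<^sub>0" if "w \<in> H" for w t
    using that Re_wc[of w t] by (simp add: H_def complex_nonpos_Reals_iff)
  define A where "A y w = oint (\<lambda>t. Ln (w - c t)) y0 y" for y w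
  define A1 where "A1 y w = oint (\<lambda>t. 1 / (w - c t)) y0 y" for y w
  define A2 where "A2 y w = oint (\<lambda>t. - 1 / (w - c t)^2) y0 y" for y w
  have cLn: "continuous_on UNIV (\<lambda>t. Ln (w - c t))" if "w \<in> H" for w
    using notin[OF that] by (intro continuous_intros cc) auto
  have Kd: "Kfun k y0 y w = cnj (A y w) - A y w" if "w \<in> H" for y w
  proof -
    have "(\<lambda>t. Ln ((cnj w + 2 * \<i> * complex_of_real (k t)) / (w - 2 * \<i> * complex_of_real (k t))))
        = (\<lambda>t. cnj (Ln (w - c t)) - Ln (w - c t))"
    proof
      fix t
      have p: "Re (w - c t) > 0" using that Re_wc[of w t] by (simp add: H_def)
      have e: "(cnj w + 2 * \<i> * complex_of_real (k t)) / (w - 2 * \<i> * complex_of_real (k t)) = cnj (w - c t) / (w - c t)"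
        by (simp add: c_def)
      show "Ln ((cnj w + 2 * \<i> * complex_of_real (k t)) / (w - 2 * \<i> * complex_of_real (k t)))
          = cnj (Ln (w - c t)) - Ln (w - c t)"
        unfolding e using LnQ[OF p] .
    qed
    then show ?thesis unfolding Kfun_def A_def using oint_cnj_diff[OF cLn[OF that]] by simp
  qed
  have Ad: "((\<lambda>w. A y w) has_field_derivative A1 y z) (at z)" if "z \<in> H" for y z
    unfolding A_def A1_def
  proof (rule oint_leibniz[OF Hopen Hconv that])
    show "((\<lambda>w. Ln (w - c t)) has_field_derivative 1 / (w - c t)) (at w)" if "w \<in> H" for w t
    proof -
      have "((\<lambda>w. Ln (w - c t)) has_field_derivative inverse (w - c t) * 1) (at w)"
        by (rule DERIV_chain2[where g="\<lambda>w. w - c t", OF has_field_derivative_Ln[OF notin[OF that]]])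
           (auto intro!: derivative_eq_intros)
      then show ?thesis by (simp add: divide_inverse)
    qed
    show "continuous_on UNIV (\<lambda>t. Ln (w - c t))" if "w \<in> H" for w using cLn[OF that] .
    have "continuous_on (H \<times> UNIV) (\<lambda>x. c (snd x))"
      by (rule continuous_on_compose2[OF cc]) (auto intro: continuous_intros)
    then show "continuous_on (H \<times> UNIV) (\<lambda>(w, t). 1 / (w - c t))"
      using nz by (auto simp: split_beta intro!: continuous_intros)
  qed
  have A1d: "((\<lambda>w. A1 y w) has_field_derivative A2 y z) (at z)" if "z \<in> H" for y z
    unfolding A1_def A2_def
  proof (rule oint_leibniz[OF Hopen Hconv that])
    show "((\<lambda>w. 1 / (w - c t)) has_field_derivative - 1 / (w - c t)^2) (at w)" if "w \<in> H" for w t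
      using nz[OF that] by (auto intro!: derivative_eq_intros simp: power2_eq_square)
    show "continuous_on UNIV (\<lambda>t. 1 / (w - c t))" if "w \<in> H" for w
      using nz[OF that] by (intro continuous_intros cc) auto
    have "continuous_on (H \<times> UNIV) (\<lambda>x. c (snd x))"
      by (rule continuous_on_compose2[OF cc]) (auto intro: continuous_intros)
    then show "continuous_on (H \<times> UNIV) (\<lambda>(w, t). - 1 / (w - c t)^2)"
      using nz by (auto simp: split_beta intro!: continuous_intros)
  qed
  define g where "g y z = of_real (deriv r y) + 2 * \<i> * Ln ((cnj z + 2 * \<i> * complex_of_real (k y)) / (z - 2 * \<i> * complex_of_real (k y)))" for y z
  show ?thesis
    unfolding psi3_eq
  proof (rule core[where g=g and gyy="\<lambda>y z. vector_derivative (\<lambda>t. g t z) (at y)"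
      and C="\<lambda>y z. 2 * \<i> * (- A1 y z)" and D="\<lambda>y z. 2 * \<i> * cnj (A1 y z)"
      and Cz="\<lambda>y z. 2 * \<i> * (- A2 y z)" and gz="\<lambda>y z. 2 * \<i> * (- (1 / (z - c y)))"
      and gzb="\<lambda>y z. 2 * \<i> * cnj (1 / (z - c y))",
      OF S_open S_pos b_hol L_cont L_log G_diff G_diff2 G_eq])
    fix q z assume qz: "(q, z) \<in> S"
    have zH: "z \<in> H" using S_pos qz by (force simp: H_def)
    have Fc: "continuous_on UNIV (\<lambda>t. Ln ((cnj z + 2 * \<i> * complex_of_real (k t)) / (z - 2 * \<i> * complex_of_real (k t))))"
    proof -
      have "(\<lambda>t. Ln ((cnj z + 2 * \<i> * complex_of_real (k t)) / (z - 2 * \<i> * complex_of_real (k t))))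
          = (\<lambda>t. Ln (cnj (z - c t) / (z - c t)))" by (simp add: c_def)
      moreover have "continuous_on UNIV (\<lambda>t. Ln (cnj (z - c t) / (z - c t)))"
      proof -
        have nd: "cnj (z - c t) / (z - c t) \<notin> \<real>\<^sub>\<le>\<^sub>0" for t
          by (rule cnjdiv_notin) (use zH Re_wc in \<open>simp add: H_def\<close>)
        show ?thesis by (intro continuous_intros cc) (use nz[OF zH] nd in auto)
      qed
      ultimately show ?thesis by metis
    qed
    show "((\<lambda>y. complex_of_real (r y) + 2 * \<i> * Kfun k y0 y z) has_vector_derivative g (Im q) z) (at (Im q))"
      unfolding g_def Kfun_def
      by (intro has_vector_derivative_add has_vector_derivative_of_real[OF smooth_d(1)[OF r_smooth]]
          has_vector_derivative_mult_right oint_deriv Fc)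
    show "((\<lambda>y. g y z) has_vector_derivative vector_derivative (\<lambda>t. g t z) (at (Im q))) (at (Im q))"
    proof -
      define x0 where "x0 = complex_of_real (k (Im q))"
      define Q where "Q x = (cnj z + 2 * \<i> * x) / (z - 2 * \<i> * x)" for x
      have Qx0: "Q x0 = cnj (z - c (Im q)) / (z - c (Im q))" by (simp add: Q_def x0_def c_def)
      have den: "z - 2 * \<i> * x0 \<noteq> 0" using nz[OF zH, of "Im q"] by (simp add: x0_def c_def)
      have "Q field_differentiable (at x0)"
        unfolding Q_def[abs_def] using den by (intro derivative_intros) auto
      moreover have "Ln field_differentiable (at (Q x0))"
        unfolding Qx0 by (rule field_differentiable_at_Ln, rule cnjdiv_notin) (use zH Re_wc in \<open>simp add: H_def\<close>)
      ultimately have "(Ln \<circ> Q) field_differentiable (at x0)" by (rule field_differentiable_compose)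
      then obtain D0 where D0: "((Ln \<circ> Q) has_field_derivative D0) (at x0)"
        by (auto simp: field_differentiable_def)
      have kv: "((\<lambda>t. complex_of_real (k t)) has_vector_derivative of_real (deriv k (Im q))) (at (Im q))"
        by (rule has_vector_derivative_of_real[OF smooth_d(1)[OF k_smooth]])
      have "((Ln \<circ> Q) \<circ> (\<lambda>t. complex_of_real (k t)) has_vector_derivative of_real (deriv k (Im q)) * D0) (at (Im q))"
        by (rule field_vector_diff_chain_at[OF kv]) (use D0 in \<open>simp add: x0_def\<close>)
      then have "((\<lambda>t. Ln ((cnj z + 2 * \<i> * complex_of_real (k t)) / (z - 2 * \<i> * complex_of_real (k t))))
          has_vector_derivative of_real (deriv k (Im q)) * D0) (at (Im q))"
        by (simp add: o_def Q_def)
      then have "((\<lambda>t. g t z) has_vector_derivative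
          of_real (deriv (deriv r) (Im q)) + 2 * \<i> * (of_real (deriv k (Im q)) * D0)) (at (Im q))"
        unfolding g_def
        by (intro has_vector_derivative_add has_vector_derivative_of_real[OF smooth_d(2)[OF r_smooth]]
            has_vector_derivative_mult_right)
      then show ?thesis by (simp add: vector_derivative_at)
    qed
    show "wd1 (\<lambda>w. complex_of_real (r (Im q)) + 2 * \<i> * Kfun k y0 (Im q) w) (2 * \<i> * - A1 (Im q) z)
          (2 * \<i> * cnj (A1 (Im q) z)) z"
    proof (rule wd1_transform[OF _ Hopen zH])
      note tA = wd1_field[OF Ad[OF zH, of "Im q"]]
      show "wd1 (\<lambda>w. complex_of_real (r (Im q)) + 2 * \<i> * (cnj (A (Im q) w) - A (Im q) w)) (2 * \<i> * - A1 (Im q) z)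
          (2 * \<i> * cnj (A1 (Im q) z)) z"
        by (rule wd1_cong[OF wd1_add[OF wd1_const[of "complex_of_real (r (Im q))"]
              wd1_mult[OF wd1_const[of "2 * \<i>"] wd1_sub[OF wd1_cnj[OF tA] tA]]]]) simp_all
      show "complex_of_real (r (Im q)) + 2 * \<i> * (cnj (A (Im q) w) - A (Im q) w) =
            complex_of_real (r (Im q)) + 2 * \<i> * Kfun k y0 (Im q) w" if "w \<in> H" for w
        using Kd[OF that] by simp
    qed
    show "wd1 (\<lambda>w. 2 * \<i> * - A1 (Im q) w) (2 * \<i> * - A2 (Im q) z) 0 z"
      by (rule wd1_field) (intro DERIV_cmult DERIV_minus A1d zH)
    show "wd1 (\<lambda>w. g (Im q) w) (2 * \<i> * - (1 / (z - c (Im q)))) (2 * \<i> * cnj (1 / (z - c (Im q)))) z"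
    proof (rule wd1_transform[OF _ Hopen zH])
      have dl: "((\<lambda>w. Ln (w - c (Im q))) has_field_derivative 1 / (z - c (Im q))) (at z)"
      proof -
        have "((\<lambda>w. Ln (w - c (Im q))) has_field_derivative inverse (z - c (Im q)) * 1) (at z)"
          by (rule DERIV_chain2[where g="\<lambda>w. w - c (Im q)", OF has_field_derivative_Ln[OF notin[OF zH]]])
             (auto intro!: derivative_eq_intros)
        then show ?thesis by (simp add: divide_inverse)
      qed
      note tl = wd1_field[OF dl]
      show "wd1 (\<lambda>w. complex_of_real (deriv r (Im q)) + 2 * \<i> * (cnj (Ln (w - c (Im q))) - Ln (w - c (Im q))))
          (2 * \<i> * - (1 / (z - c (Im q)))) (2 * \<i> * cnj (1 / (z - c (Im q)))) z"
        by (rule wd1_cong[OF wd1_add[OF wd1_const[of "complex_of_real (deriv r (Im q))"]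
              wd1_mult[OF wd1_const[of "2 * \<i>"] wd1_sub[OF wd1_cnj[OF tl] tl]]]]) simp_all
      show "complex_of_real (deriv r (Im q)) + 2 * \<i> * (cnj (Ln (w - c (Im q))) - Ln (w - c (Im q))) = g (Im q) w"
        if "w \<in> H" for w
      proof -
        have p: "Re (w - c (Im q)) > 0" using that Re_wc by (simp add: H_def)
        have e: "(cnj w + 2 * \<i> * complex_of_real (k (Im q))) / (w - 2 * \<i> * complex_of_real (k (Im q)))
           = cnj (w - c (Im q)) / (w - c (Im q))"
          by (simp add: c_def)
        show ?thesis unfolding g_def e using LnQ[OF p] by simp
      qed
    qed
    have w0: "z - c (Im q) \<noteq> 0" using nz[OF zH] .
    have s0: "z + cnj z \<noteq> 0" using zH by (simp add: H_def complex_eq_iff)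
    have sw: "z + cnj z = (z - c (Im q)) + cnj (z - c (Im q))" by (simp add: c_def)
    show "(- inverse (z + cnj z) - \<i> / 2 * (2 * \<i> * cnj (1 / (z - c (Im q))))) *
          (- inverse (z + cnj z) + \<i> / 2 * (2 * \<i> * - (1 / (z - c (Im q))))) = inverse (z + cnj z) ^ 2"
      using H6_alg[OF w0 sw s0] by simp
  qed
qed

theorem mainTheorem2:
  fixes S :: "(complex \<times> complex) set"
    and b :: "complex \<Rightarrow> complex"
    and L :: "complex \<times> complex \<Rightarrow> complex"
    and G :: "complex \<Rightarrow> real"
    and r k :: "real \<Rightarrow> real"
    and y0 :: real
  assumes S_open: "open S"
    and S_pos: "\<forall>p\<in>S. Re (snd p) > 0"
    and b_hol: "b holomorphic_on (snd ` S)"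
    and L_cont: "continuous_on S L"
    and L_log: "\<forall>p\<in>S. exp (L p) = fst p + b (snd p)"
    and r_smooth: "smooth_real r"
    and k_smooth: "smooth_real k"
    and G_diff: "\<forall>z\<in>snd ` S. G differentiable (at z)"
    and G_diff2: "\<forall>v. \<forall>z\<in>snd ` S. (dd G v) differentiable (at z)"
    and G_eq: "\<forall>z\<in>snd ` S. wzb (wz (\<lambda>w. complex_of_real (G w))) z
                 = (b z + cnj (b z)) / (z + cnj z)\<^sup>2"
  shows "solves S (psi1 b L G r) \<and> solves S (psi2 b L G r) \<and> solves S (psi3 b L G r k y0)"
  using case1[OF S_open S_pos b_hol L_cont L_log r_smooth G_diff G_diff2 G_eq]
    case2[OF S_open S_pos b_hol L_cont L_log r_smooth G_diff G_diff2 G_eq]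
    case3[OF S_open S_pos b_hol L_cont L_log r_smooth k_smooth G_diff G_diff2 G_eq]
  by blast


end
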